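(* Let $X$ be a non-singular $n$-dimensional tropical hypersurface of a non-singular tropical toric variety $Y$. Let $\sigma$ be a face of $X$ of dimension $q$ whose relative interior is contained in a stratum $Y_\rho$ of dimension $m$. Then the polynomial $$\chi_\sigma(\lambda):=\sum_{p=0}^n(-1)^p\operatorname{rank}\mathcal{F}^X_p(\sigma)\lambda^p$$ equals $$\chi_\sigma(\lambda)=(1-\lambda)^m-(1-\lambda)^q(-\lambda)^{m-q}.$$
   Context: A non-singular tropical toric variety $Y$ of dimension $n+1$ is the tropical toric variety associated to a simplicial unimodular rational polyhedral fan $\Sigma$ in $\mathbb{R}^{n+1}$; it is the disjoint union of strata $Y_\rho\cong\mathbb{R}^{n+1-\dim\rho}$, $\rho\in\Sigma$. For $\rho$ with primitive ray generators $r_1,\dots,r_s$, $T_{\mathbb Z}(Y_\rho)=\mathbb{Z}^{n+1}/\langle r_1,\dots,r_s\rangle$, with quotient maps $\pi_{\rho\eta}$ for $\rho\subset\eta$. For a rational polyhedron $\sigma$ with relative interior in $Y_\rho$, $T_{\mathbb Z}(\sigma)\subset T_{\mathbb Z}(Y_\rho)$ is its lattice of integer tangent vectors. A tropical hypersurface $X$ in $Y$ is the closure of a tropical hypersurface in $Y_0=\mathbb{R}^{n+1}$ defined by a tropical polynomial, with the polyhedral structure dual to the induced regular subdivision of its Newton polytope; $X$ is non-singular if each $X\cap Y_\rho$ is a tropical hypersurface in $Y_\rho$ dual to a primitive regular triangulation of its Newton polytope. For a face $\tau$ of $X$ with relative interior in $Y_\rho$, $\mathcal{F}^X_p(\tau)=\sum_\sigma\bigwedge^pT_{\mathbb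 Z}(\sigma)\subset\bigwedge^pT_{\mathbb Z}(Y_\rho)$, sum over faces $\sigma\supseteq\tau$ of $X$ with relative interior in $Y_\rho$ (a free $\mathbb Z$-module). *)

theory Defs
  imports "HOL-Analysis.Analysis"
begin

text \<open>Ambient space: Y_0 = R^(n+1) is modelled as real^'n with CARD('n) = n+1.
  Integer vectors model Z^(n+1).  A stratum Y_rho = R^(n+1)/span rho is modelled by
  subsets of real^'n that are saturated under span rho (preimages).\<close>

definition ivecs :: "(real^'n::finite) set" where
  "ivecs = {v. \<forall>i. v$i \<in> \<int>}"

definition int_span :: "(real^'n::finite) set \<Rightarrow> (real^'n) set" where
  "int_span B = {(\<Sum>b\<in>F. c b *\<^sub>R b) | F c. finite F \<and> F \<subseteq> B \<and> (\<forall>b\<in>F. c b \<in> \<int>)}"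

definition lattice_basis :: "(real^'n::finite) set \<Rightarrow> (real^'n) set \<Rightarrow> nat \<Rightarrow> bool" where
  "lattice_basis L B k \<longleftrightarrow> finite B \<and> card B = k \<and> B \<subseteq> L \<and> int_span B = L"

definition cone_of :: "(real^'n::finite) set \<Rightarrow> (real^'n) set" where
  "cone_of R = {(\<Sum>r\<in>R. t r *\<^sub>R r) | t. \<forall>r\<in>R. t r \<ge> 0}"

text \<open>Simplicial unimodular rational polyhedral fan; each cone is given by the set of
  its primitive ray generators.\<close>
definition smooth_fan :: "(real^'n::finite) set set \<Rightarrow> bool" where
  "smooth_fan Fan \<longleftrightarrow> finite Fan \<and> {} \<in> Fan
     \<and> (\<forall>\<rho>\<in>Fan. finite \<rho> \<and> (\<exists>B. lattice_basis ivecs B CARD('n) \<and> \<rho> \<subseteq> B))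
     \<and> (\<forall>\<rho>\<in>Fan. \<forall>\<rho>'. \<rho>' \<subseteq> \<rho> \<longrightarrow> \<rho>' \<in> Fan)
     \<and> (\<forall>\<rho>\<in>Fan. \<forall>\<eta>\<in>Fan. cone_of \<rho> \<inter> cone_of \<eta> = cone_of (\<rho> \<inter> \<eta>))"

text \<open>The character lattice of the stratum Y_rho: the dual of Z^(n+1)/<rho>.\<close>
definition Mlat :: "(real^'n::finite) set \<Rightarrow> (real^'n) set" where
  "Mlat \<rho> = {a \<in> ivecs. \<forall>r\<in>\<rho>. a \<bullet> r = 0}"

text \<open>A tropical polynomial on Y_rho: finite nonempty set of exponents A in Mlat rho,
  coefficients c; max convention.\<close>
definition trop_poly :: "(real^'n::finite) set \<Rightarrow> (real^'n) set \<Rightarrow> bool" where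
  "trop_poly \<rho> A \<longleftrightarrow> finite A \<and> A \<noteq> {} \<and> A \<subseteq> Mlat \<rho>"

definition tval :: "(real^'n::finite) set \<Rightarrow> (real^'n \<Rightarrow> real) \<Rightarrow> real^'n \<Rightarrow> real" where
  "tval A c x = Max ((\<lambda>a. c a + a \<bullet> x) ` A)"

definition targmax :: "(real^'n::finite) set \<Rightarrow> (real^'n \<Rightarrow> real) \<Rightarrow> real^'n \<Rightarrow> (real^'n) set" where
  "targmax A c x = {a\<in>A. c a + a \<bullet> x = tval A c x}"

definition tvar :: "(real^'n::finite) set \<Rightarrow> (real^'n \<Rightarrow> real) \<Rightarrow> (real^'n) set" where
  "tvar A c = {x. card (targmax A c x) \<ge> 2}"

text \<open>Faces of the tropical hypersurface: the closed cells dual to the cells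
  conv(S) (S a maximizing set, |S| \<ge> 2) of the induced regular subdivision.\<close>
definition tfaces :: "(real^'n::finite) set \<Rightarrow> (real^'n \<Rightarrow> real) \<Rightarrow> (real^'n) set set" where
  "tfaces A c = {{y. S \<subseteq> targmax A c y} | S. \<exists>x. targmax A c x = S \<and> card S \<ge> 2}"

text \<open>The induced regular subdivision is a primitive triangulation: every cell is a
  unimodular simplex with respect to the lattice Mlat rho.\<close>
definition prim_tri :: "(real^'n::finite) set \<Rightarrow> (real^'n) set \<Rightarrow> (real^'n \<Rightarrow> real) \<Rightarrow> bool" where
  "prim_tri \<rho> A c \<longleftrightarrow> (\<forall>x. \<exists>a0\<in>targmax A c x.
     card ((\<lambda>a. a - a0) ` (targmax A c x - {a0})) = card (targmax A c x) - 1 \<and>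
     (\<exists>B. lattice_basis (Mlat \<rho>) B (CARD('n) - card \<rho>) \<and>
          (\<lambda>a. a - a0) ` (targmax A c x - {a0}) \<subseteq> B))"

text \<open>Intersection with the stratum Y_rho of the closure in Y of a set X0 in Y_0
  (as a saturated subset of real^'n): a sequence x_k converges to [y] in Y_rho iff
  x_k = y_k + sum_r t_{k,r} r with y_k \<longrightarrow> y and all t_{k,r} \<longrightarrow> +\<infinity>.\<close>
definition clos_stratum :: "(real^'n::finite) set \<Rightarrow> (real^'n) set \<Rightarrow> (real^'n) set" where
  "clos_stratum \<rho> X0 = {y. \<exists>xs ys ts. (\<forall>k. xs k \<in> X0)
      \<and> (\<forall>k::nat. xs k = ys k + (\<Sum>r\<in>\<rho>. ts k r *\<^sub>R r))
      \<and> ys \<longlonglongrightarrow> y \<and> (\<forall>r\<in>\<rho>. filterlim (\<lambda>k. ts k r) at_top sequentially)}"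

text \<open>X (closure of X0 in Y) is non-singular: each X \<inter> Y_rho is a tropical hypersurface
  in Y_rho dual to a primitive regular triangulation.\<close>
definition nonsingular :: "(real^'n::finite) set set \<Rightarrow> (real^'n) set \<Rightarrow> bool" where
  "nonsingular Fan X0 \<longleftrightarrow> (\<forall>\<rho>\<in>Fan. \<exists>A c. trop_poly \<rho> A \<and> prim_tri \<rho> A c
       \<and> clos_stratum \<rho> X0 = tvar A c)"

text \<open>Real tangent space of a (saturated) polyhedron; contains span rho.\<close>
definition tspace :: "(real^'n::finite) set \<Rightarrow> (real^'n) set" where
  "tspace S = span {x - y | x y. x \<in> S \<and> y \<in> S}"

definition ldet :: "nat \<Rightarrow> (nat \<Rightarrow> nat \<Rightarrow> real) \<Rightarrow> real" where
  "ldet p M = (\<Sum>\<pi> | \<pi> permutes {..<p}. real_of_int (sign \<pi>) * (\<Prod>i<p. M i (\<pi> i)))"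

text \<open>v_0 \<and> ... \<and> v_(p-1) in \<And>^p T_Z(Y_rho), where T_Z(Y_rho) = Z^(n+1)/<rho>, represented
  faithfully (injective Z-linear embedding) by its pairing with p-tuples of elements of
  the dual lattice Mlat rho: (phi_1..phi_p) \<mapsto> det(phi_i(v_k)).\<close>
definition wedge :: "(real^'n::finite) set \<Rightarrow> nat \<Rightarrow> (nat \<Rightarrow> real^'n) \<Rightarrow> ((real^'n) list \<Rightarrow> real)" where
  "wedge \<rho> p vs = (\<lambda>phis. if length phis = p \<and> set phis \<subseteq> Mlat \<rho>
                       then ldet p (\<lambda>i k. (phis ! i) \<bullet> vs k) else 0)"

definition zspan :: "('a \<Rightarrow> real) set \<Rightarrow> ('a \<Rightarrow> real) set" where
  "zspan U = {(\<lambda>z. \<Sum>u\<in>F. c u * u z) | F c. finite F \<and> F \<subseteq> U \<and> (\<forall>u\<in>F. c u \<in> \<int>)}"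

definition zindep :: "('a \<Rightarrow> real) set \<Rightarrow> bool" where
  "zindep T \<longleftrightarrow> (\<forall>c. (\<forall>t\<in>T. c t \<in> \<int>) \<and> (\<forall>z. (\<Sum>t\<in>T. c t * t z) = 0) \<longrightarrow> (\<forall>t\<in>T. c t = 0))"

definition zrank :: "('a \<Rightarrow> real) set \<Rightarrow> nat" where
  "zrank S = Max {card T | T. finite T \<and> T \<subseteq> S \<and> zindep T}"

text \<open>F^X_p(sigma) for a face sigma with relative interior in Y_rho, where the faces of X
  with relative interior in Y_rho are those of the hypersurface X \<inter> Y_rho = tvar A c.\<close>
definition Fp :: "(real^'n::finite) set \<Rightarrow> (real^'n) set \<Rightarrow> (real^'n \<Rightarrow> real) \<Rightarrow> nat
                  \<Rightarrow> (real^'n) set \<Rightarrow> ((real^'n) list \<Rightarrow> real) set" where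
  "Fp \<rho> A c p \<sigma> = zspan {wedge \<rho> p vs | vs \<tau>. \<tau> \<in> tfaces A c \<and> \<sigma> \<subseteq> \<tau>
                             \<and> (\<forall>k<p. vs k \<in> ivecs \<inter> tspace \<tau>)}"

end

theory Submission
  imports Defs "Jordan_Normal_Form.Determinant"
begin

no_notation Matrix.scalar_prod (infix "\<bullet>" 70)



lemma ldet_det: "ldet p M = Determinant.det (Matrix.mat p p (\<lambda>(i,j). M i j))"
  unfolding ldet_def Determinant.det_def by (auto simp: lessThan_atLeast0 intro!: sum.cong prod.cong)

lemma ldet_cong:
  assumes "\<And>i l. i < p \<Longrightarrow> l < p \<Longrightarrow> M i l = M' i l"
  shows "ldet p M = ldet p M'"
  unfolding ldet_def
proof (rule sum.cong[OF refl])
  fix \<pi> assume "\<pi> \<in> {\<pi>. \<pi> permutes {..<p}}"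
  then have "\<And>i. i < p \<Longrightarrow> \<pi> i < p" using permutes_in_image by fastforce
  then show "real_of_int (sign \<pi>) * (\<Prod>i<p. M i (\<pi> i)) = real_of_int (sign \<pi>) * (\<Prod>i<p. M' i (\<pi> i))"
    using assms by (metis (no_types, lifting) lessThan_iff prod.cong)
qed

lemma ldet_zero_row:
  assumes "i < p" "\<And>l. l < p \<Longrightarrow> M i l = 0"
  shows "ldet p M = 0"
proof -
  have "ldet p M = ldet p (\<lambda>r l. if r = i then 0 else M r l)"
    using assms by (intro ldet_cong) auto
  also have "\<dots> = 0"
    unfolding ldet_def
    by (rule sum.neutral) (use assms in \<open>auto intro!: prod_zero bexI[of _ i]\<close>)
  finally show ?thesis .
qed

lemma ldet_identical_rows:
  assumes "i < p" "j < p" "i \<noteq> j" "\<And>l. l < p \<Longrightarrow> M i l = M j l"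
  shows "ldet p M = 0"
  unfolding ldet_det
  by (rule det_identical_rows[of _ p i j]) (use assms in \<open>auto intro!: eq_vecI\<close>)

lemma ldet_permute_rows:
  assumes "\<pi> permutes {..<p}"
  shows "ldet p (\<lambda>i l. M (\<pi> i) l) = of_int (sign \<pi>) * ldet p M"
proof -
  have pm: "\<pi> permutes {0..<p}" using assms by (simp add: lessThan_atLeast0)
  have img: "\<And>i. i < p \<Longrightarrow> \<pi> i < p" using permutes_in_image[OF pm] by simp
  have "Matrix.mat p p (\<lambda>(i,j). M (\<pi> i) j) = Matrix.mat p p (\<lambda>(i,j). Matrix.mat p p (\<lambda>(i,j). M i j) $$ (\<pi> i, j))"
    by (rule eq_matI) (simp_all add: img)
  then show ?thesis unfolding ldet_det
    using det_permute_rows[OF _ pm, of "Matrix.mat p p (\<lambda>(i,j). M i j)"] by simp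
qed


lemma ldet_diag: "ldet p (\<lambda>i l. if i = l then d else 0) = d ^ p"
proof -
  have "Matrix.mat p p (\<lambda>(i,j). if i = j then d else 0) = d \<cdot>\<^sub>m 1\<^sub>m p"
    by (rule eq_matI) simp_all
  then show ?thesis unfolding ldet_det using det_smult[of d "1\<^sub>m p"] by simp
qed

lemma ldet_int:
  assumes "\<And>i l. i < p \<Longrightarrow> l < p \<Longrightarrow> M i l \<in> \<int>"
  shows "ldet p M \<in> \<int>"
  unfolding ldet_def
proof (intro Ints_sum Ints_mult Ints_prod)
  fix \<pi> i assume "\<pi> \<in> {\<pi>. \<pi> permutes {..<p}}" "i \<in> {..<p}"
  then show "M i (\<pi> i) \<in> \<int>" using assms permutes_in_image by fastforce
qed simp

lemma ldet_multilinear: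
  assumes "finite J"
  shows "ldet p (\<lambda>i l. \<Sum>j\<in>J. \<alpha> i j * Q j l)
     = (\<Sum>f\<in>PiE {..<p} (\<lambda>_. J). (\<Prod>i<p. \<alpha> i (f i)) * ldet p (\<lambda>i l. Q (f i) l))"
proof -
  have "ldet p (\<lambda>i l. \<Sum>j\<in>J. \<alpha> i j * Q j l)
     = (\<Sum>\<pi> | \<pi> permutes {..<p}. real_of_int (sign \<pi>) *
          (\<Sum>f\<in>PiE {..<p} (\<lambda>_. J). \<Prod>i<p. \<alpha> i (f i) * Q (f i) (\<pi> i)))"
    unfolding ldet_def by (rule sum.cong[OF refl]) (simp add: prod_sum_PiE assms)
  also have "\<dots> = (\<Sum>\<pi> | \<pi> permutes {..<p}. (\<Sum>f\<in>PiE {..<p} (\<lambda>_. J).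
          (\<Prod>i<p. \<alpha> i (f i)) * (real_of_int (sign \<pi>) * (\<Prod>i<p. Q (f i) (\<pi> i)))))"
    by (rule sum.cong[OF refl], unfold sum_distrib_left, rule sum.cong[OF refl]) (simp only: prod.distrib mult_ac)
  also have "\<dots> = (\<Sum>f\<in>PiE {..<p} (\<lambda>_. J). (\<Sum>\<pi> | \<pi> permutes {..<p}.
          (\<Prod>i<p. \<alpha> i (f i)) * (real_of_int (sign \<pi>) * (\<Prod>i<p. Q (f i) (\<pi> i)))))"
    by (rule sum.swap)
  also have "\<dots> = (\<Sum>f\<in>PiE {..<p} (\<lambda>_. J). (\<Prod>i<p. \<alpha> i (f i)) * ldet p (\<lambda>i l. Q (f i) l))"
    unfolding ldet_def by (simp only: sum_distrib_left)
  finally show ?thesis .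
qed


lemma int_dep:
  fixes v :: "'a \<Rightarrow> 'b \<Rightarrow> real"
  assumes "finite I" "finite T" "card I < card T" "\<forall>t\<in>T. \<forall>i\<in>I. v t i \<in> \<int>"
  shows "\<exists>c. (\<forall>t\<in>T. c t \<in> \<int>) \<and> (\<exists>t\<in>T. c t \<noteq> 0) \<and> (\<forall>i\<in>I. (\<Sum>t\<in>T. c t * v t i) = 0)"
  using assms
proof (induction I arbitrary: T v rule: finite_induct)
  case empty
  then have "T \<noteq> {}" by auto
  then show ?case by (intro exI[of _ "\<lambda>_. 1"]) auto
next
  case (insert z I)
  show ?case
  proof (cases "\<forall>t\<in>T. v t z = 0")
    case True
    have "card I < card T" using insert by simp
    moreover have "\<forall>t\<in>T. \<forall>i\<in>I. v t i \<in> \<int>" using insert.prems(3) by auto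
    ultimately obtain c where "(\<forall>t\<in>T. c t \<in> \<int>) \<and> (\<exists>t\<in>T. c t \<noteq> 0) \<and> (\<forall>i\<in>I. (\<Sum>t\<in>T. c t * v t i) = 0)"
      using insert.IH[OF insert.prems(1)] by blast
    then show ?thesis using True by (intro exI[of _ c]) auto
  next
    case False
    then obtain t0 where t0: "t0 \<in> T" "v t0 z \<noteq> 0" by auto
    define a where "a = v t0 z"
    define T' where "T' = T - {t0}"
    define v' where "v' t i = a * v t i - v t z * v t0 i" for t i
    have fT': "finite T'" using insert.prems T'_def by auto
    have cT': "card I < card T'" using insert.prems t0 insert.hyps unfolding T'_def by auto
    have iT': "\<forall>t\<in>T'. \<forall>i\<in>I. v' t i \<in> \<int>"
      using insert.prems t0 unfolding T'_def v'_def a_def by auto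
    from insert.IH[OF fT' cT' iT'] obtain c' where
      c': "\<forall>t\<in>T'. c' t \<in> \<int>" "\<exists>t\<in>T'. c' t \<noteq> 0" "\<forall>i\<in>I. (\<Sum>t\<in>T'. c' t * v' t i) = 0"
      by auto
    define c where "c t = (if t = t0 then - (\<Sum>s\<in>T'. c' s * v s z) else a * c' t)" for t
    have T: "T = insert t0 T'" "t0 \<notin> T'" using t0 T'_def by auto
    have key: "(\<Sum>t\<in>T. c t * v t i) = (\<Sum>t\<in>T'. c' t * v' t i)" for i
    proof -
      have "(\<Sum>t\<in>T. c t * v t i) = c t0 * v t0 i + (\<Sum>t\<in>T'. c t * v t i)"
        using T fT' by simp
      also have "(\<Sum>t\<in>T'. c t * v t i) = (\<Sum>t\<in>T'. a * c' t * v t i)"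
        using T by (intro sum.cong) (auto simp: c_def)
      also have "c t0 * v t0 i = - (\<Sum>s\<in>T'. c' s * v s z * v t0 i)"
        by (simp add: c_def sum_distrib_right)
      finally show ?thesis
        by (simp add: v'_def sum_subtractf right_diff_distrib sum_distrib_left mult_ac flip: sum.distrib)
    qed
    show ?thesis
    proof (intro exI[of _ c] conjI ballI)
      fix t assume "t \<in> T"
      then show "c t \<in> \<int>" using c'(1) insert.prems t0 T unfolding c_def a_def
        by (auto intro!: Ints_sum Ints_mult)
    next
      from c'(2) obtain t where "t \<in> T'" "c' t \<noteq> 0" by auto
      then show "\<exists>t\<in>T. c t \<noteq> 0" using T t0 by (intro bexI[of _ t]) (auto simp: c_def a_def)
    next
      fix i assume "i \<in> insert z I"
      then show "(\<Sum>t\<in>T. c t * v t i) = 0"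
      proof
        assume "i = z"
        then show ?thesis unfolding key by (simp add: v'_def a_def)
      next
        assume "i \<in> I" then show ?thesis unfolding key using c'(3) by auto
      qed
    qed
  qed
qed


lemma indep_idx:
  fixes bl :: "nat \<Rightarrow> real^'n::finite"
  assumes "independent (bl ` {..<m})" "inj_on bl {..<m}" "(\<Sum>l<m. c l *\<^sub>R bl l) = 0" "j < m"
  shows "c j = 0"
proof -
  define c' where "c' v = c (inv_into {..<m} bl v)" for v
  have "(\<Sum>v\<in>bl ` {..<m}. c' v *\<^sub>R v) = (\<Sum>l<m. c' (bl l) *\<^sub>R bl l)"
    using sum.reindex[OF assms(2), of "\<lambda>v. c' v *\<^sub>R v"] by (simp add: comp_def)
  also have "\<dots> = (\<Sum>l<m. c l *\<^sub>R bl l)"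
    by (rule sum.cong[OF refl]) (simp add: c'_def inv_into_f_f[OF assms(2)])
  finally have "(\<Sum>v\<in>bl ` {..<m}. c' v *\<^sub>R v) = 0" using assms(3) by simp
  then have "\<forall>v\<in>bl ` {..<m}. c' v = 0" using assms(1) unfolding independent_explicit by blast
  then have "c' (bl j) = 0" using assms(4) by blast
  then show ?thesis by (simp add: c'_def inv_into_f_f[OF assms(2)] assms(4))
qed

lemma ivecs_inner: "x \<in> ivecs \<Longrightarrow> y \<in> ivecs \<Longrightarrow> inner x y \<in> \<int>"
  unfolding ivecs_def inner_vec_def by (auto intro!: Ints_sum Ints_mult)

lemma ivecs_sum: "(\<And>l. l \<in> L \<Longrightarrow> c l \<in> \<int>) \<Longrightarrow> (\<And>l. l \<in> L \<Longrightarrow> v l \<in> ivecs) \<Longrightarrow> (\<Sum>l\<in>L. c l *\<^sub>R v l) \<in> ivecs"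
  unfolding ivecs_def by (auto simp: sum_component)

lemma sl_bij:
  assumes "finite J"
  shows "bij_betw (\<lambda>r. sorted_list_of_set J ! r) {..<card J} J"
proof -
  let ?s = "sorted_list_of_set J"
  have "inj_on (\<lambda>r. ?s ! r) {..<card J}"
    by (rule inj_onI) (simp add: nth_eq_iff_index_eq)
  moreover have "(\<lambda>r. ?s ! r) ` {..<card J} = J"
  proof -
    have "(\<lambda>r. ?s ! r) ` {..<length ?s} = set ?s"
      by (auto simp: in_set_conv_nth)
    then show ?thesis using assms by simp
  qed
  ultimately show ?thesis unfolding bij_betw_def by simp
qed

lemma perm_rep:
  assumes inj: "inj_on f {..<p}"
  defines "J \<equiv> f ` {..<p}"
  defines "\<pi> \<equiv> restrict_id (\<lambda>i. inv_into {..<p} (\<lambda>r. sorted_list_of_set J ! r) (f i)) {..<p}"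
  shows "\<pi> permutes {..<p}" "\<And>i. i < p \<Longrightarrow> sorted_list_of_set J ! (\<pi> i) = f i" "card J = p"
proof -
  let ?g = "\<lambda>r. sorted_list_of_set J ! r"
  have cJ: "card J = p" unfolding J_def using inj by (simp add: card_image)
  then show "card J = p" .
  have fJ: "finite J" unfolding J_def by simp
  have bij: "bij_betw ?g {..<p} J" using sl_bij[OF fJ] cJ by simp
  let ?h = "\<lambda>i. inv_into {..<p} ?g (f i)"
  have h1: "?g (?h i) = f i" if "i < p" for i
    using bij that unfolding J_def bij_betw_def by (auto intro: f_inv_into_f)
  then show "\<And>i. i < p \<Longrightarrow> ?g (\<pi> i) = f i" unfolding \<pi>_def restrict_id_def by simp
  have h2: "?h i < p" if "i < p" for i
  proof -
    have "f i \<in> ?g ` {..<p}" using bij that unfolding J_def bij_betw_def by auto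
    then have "?h i \<in> {..<p}" by (rule inv_into_into)
    then show ?thesis by simp
  qed
  have hinj: "inj_on ?h {..<p}"
  proof (rule inj_onI)
    fix i j assume ij: "i \<in> {..<p}" "j \<in> {..<p}" and e: "?h i = ?h j"
    have "f i = ?g (?h i)" using h1[of i] ij by simp
    also have "\<dots> = ?g (?h j)" by (simp only: e)
    also have "\<dots> = f j" using h1[of j] ij by simp
    finally have "f i = f j" .
    then show "i = j" using inj \<open>i \<in> {..<p}\<close> \<open>j \<in> {..<p}\<close> by (auto dest: inj_onD)
  qed
  have sub: "?h ` {..<p} \<subseteq> {..<p}" using h2 by blast
  have "?h ` {..<p} = {..<p}" by (rule endo_inj_surj[OF finite_lessThan sub hinj])
  then have "bij_betw ?h {..<p} {..<p}" using hinj unfolding bij_betw_def by blast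
  then show "\<pi> permutes {..<p}" unfolding \<pi>_def by (rule permutes_restrict_id)
qed
lemma dual_int_vectors:
  fixes bl :: "nat \<Rightarrow> real^'n::finite"
  assumes iv: "\<And>i. i < m \<Longrightarrow> bl i \<in> ivecs" and ind: "independent (bl ` {..<m})" and inj: "inj_on bl {..<m}"
  shows "\<exists>u d. d \<noteq> 0 \<and> (\<forall>j<m. u j \<in> ivecs) \<and> (\<forall>i<m. \<forall>j<m. bl i \<bullet> u j = (if i = j then d else 0))"
proof -
  define G :: "int mat" where "G = Matrix.mat m m (\<lambda>(i,j). \<lfloor>bl i \<bullet> bl j\<rfloor>)"
  have Gc: "G \<in> carrier_mat m m" unfolding G_def by simp
  have Gij: "real_of_int (G $$ (i,j)) = bl i \<bullet> bl j" if "i < m" "j < m" for i j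
    using that iv ivecs_inner[of "bl i" "bl j"] unfolding G_def by simp
  define Adj where "Adj = adj_mat G"
  have Ac: "Adj \<in> carrier_mat m m" and GA: "G * Adj = Determinant.det G \<cdot>\<^sub>m 1\<^sub>m m"
    using adj_mat[OF Gc] unfolding Adj_def by auto
  have detnz: "Determinant.det G \<noteq> 0"
  proof
    assume "Determinant.det G = 0"
    then obtain w where w: "w \<in> carrier_vec m" "w \<noteq> 0\<^sub>v m" "G *\<^sub>v w = 0\<^sub>v m"
      using det_0_iff_vec_prod_zero[OF Gc] by auto
    define x where "x = (\<Sum>l<m. real_of_int (vec_index w l) *\<^sub>R bl l)"
    have Gw: "(\<Sum>l<m. real_of_int (G $$ (i,l)) * real_of_int (vec_index w l)) = 0" if "i < m" for i
    proof -
      have "vec_index (G *\<^sub>v w) i = 0" using w(3) that by simp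
      moreover have "vec_index (G *\<^sub>v w) i = (\<Sum>l=0..<m. G $$ (i,l) * vec_index w l)"
        using that Gc w(1) by (simp add: scalar_prod_def)
      ultimately have "(\<Sum>l<m. G $$ (i,l) * vec_index w l) = 0"
        by (simp add: lessThan_atLeast0)
      then have "real_of_int (\<Sum>l<m. G $$ (i,l) * vec_index w l) = 0" by (simp only: of_int_0)
      then show ?thesis by (simp only: of_int_sum of_int_mult)
    qed
    have "x \<bullet> x = (\<Sum>i<m. real_of_int (vec_index w i) * (\<Sum>l<m. real_of_int (vec_index w l) * (bl l \<bullet> bl i)))"
      unfolding x_def by (simp only: inner_sum_left inner_sum_right inner_scaleR_left inner_scaleR_right)
    also have "\<dots> = 0"
    proof (intro sum.neutral ballI)
      fix i assume i: "i \<in> {..<m}"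
      have "(\<Sum>l<m. real_of_int (vec_index w l) * (bl l \<bullet> bl i)) = (\<Sum>l<m. real_of_int (G $$ (i,l)) * real_of_int (vec_index w l))"
        using Gij i by (intro sum.cong refl) (simp add: inner_commute)
      then show "real_of_int (vec_index w i) * (\<Sum>l<m. real_of_int (vec_index w l) * (bl l \<bullet> bl i)) = 0"
        using Gw i by simp
    qed
    finally have "x = 0" by simp
    then have "\<forall>j<m. real_of_int (vec_index w j) = 0"
      using indep_idx[OF ind inj, of "\<lambda>l. real_of_int (vec_index w l)"] unfolding x_def by blast
    then have "w = 0\<^sub>v m" using w(1) by (intro eq_vecI) auto
    then show False using w(2) by simp
  qed
  define d where "d = real_of_int (Determinant.det G)"
  define u where "u j = (\<Sum>l<m. real_of_int (Adj $$ (l,j)) *\<^sub>R bl l)" for j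
  show ?thesis
  proof (intro exI[of _ u] exI[of _ d] conjI allI impI)
    show "d \<noteq> 0" using detnz d_def by simp
  next
    fix j assume "j < m" then show "u j \<in> ivecs" unfolding u_def by (intro ivecs_sum) (auto intro: iv)
  next
    fix i j assume ij: "i < m" "j < m"
    have "bl i \<bullet> u j = (\<Sum>l<m. real_of_int (G $$ (i,l)) * real_of_int (Adj $$ (l,j)))"
      unfolding u_def using Gij ij by (auto simp: inner_sum_right intro!: sum.cong)
    also have "\<dots> = real_of_int ((G * Adj) $$ (i,j))"
      using ij Gc Ac by (simp add: scalar_prod_def lessThan_atLeast0)
    also have "\<dots> = (if i = j then d else 0)"
      unfolding GA using ij Gc by (simp add: d_def)
    finally show "bl i \<bullet> u j = (if i = j then d else 0)" .
  qed
qed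


lemma zspan_gen: "w \<in> U \<Longrightarrow> w \<in> zspan U"
  unfolding zspan_def
  by (rule CollectI, rule exI[of _ "{w}"], rule exI[of _ "\<lambda>_. 1"]) auto

lemma Mlat_ivecs: "x \<in> Mlat \<rho> \<Longrightarrow> x \<in> ivecs"
  unfolding Mlat_def by auto

lemma sl_facts:
  assumes "finite J"
  shows "length (sorted_list_of_set J) = card J" "set (sorted_list_of_set J) = J"
    "distinct (sorted_list_of_set J)"
    "\<And>r. r < card J \<Longrightarrow> sorted_list_of_set J ! r \<in> J"
    "\<And>x. x \<in> J \<Longrightarrow> \<exists>r<card J. sorted_list_of_set J ! r = x"
proof -
  show l: "length (sorted_list_of_set J) = card J" by simp
  show s: "set (sorted_list_of_set J) = J" using assms by simp
  show "distinct (sorted_list_of_set J)" by simp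
  show "\<And>r. r < card J \<Longrightarrow> sorted_list_of_set J ! r \<in> J"
    using l s nth_mem by metis
  show "\<And>x. x \<in> J \<Longrightarrow> \<exists>r<card J. sorted_list_of_set J ! r = x"
    using l s in_set_conv_nth by metis
qed

locale alg =
  fixes \<rho> :: "(real^'n::finite) set" and bl :: "nat \<Rightarrow> real^'n" and m k :: nat
    and Faces :: "(real^'n) set set" and u :: "nat \<Rightarrow> real^'n" and d :: real
  assumes blM: "\<And>i. i < m \<Longrightarrow> bl i \<in> Mlat \<rho>"
    and gen: "\<And>phi. phi \<in> Mlat \<rho> \<Longrightarrow> \<exists>\<alpha>. phi = (\<Sum>j<m. \<alpha> j *\<^sub>R bl j)"
    and km: "k \<le> m"
    and up: "\<And>\<tau>. \<tau> \<in> Faces \<Longrightarrow> (\<exists>i<k. \<forall>v\<in>tspace \<tau>. bl i \<bullet> v = 0)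
               \<or> (\<exists>i<k. \<exists>j<k. i \<noteq> j \<and> (\<forall>v\<in>tspace \<tau>. bl i \<bullet> v = bl j \<bullet> v))"
    and lo: "\<And>i. i < k \<Longrightarrow> \<exists>\<tau>\<in>Faces. \<forall>v. bl i \<bullet> v = 0 \<longrightarrow> v \<in> tspace \<tau>"
    and dnz: "d \<noteq> 0" and uiv: "\<And>j. j < m \<Longrightarrow> u j \<in> ivecs"
    and dual: "\<And>i j. i < m \<Longrightarrow> j < m \<Longrightarrow> bl i \<bullet> u j = (if i = j then d else 0)"
begin

abbreviation "sl J \<equiv> sorted_list_of_set J"

definition Good :: "nat \<Rightarrow> nat set set" where
  "Good p = {J. J \<subseteq> {..<m} \<and> card J = p \<and> \<not> {..<k} \<subseteq> J}"

definition W :: "nat \<Rightarrow> ((real^'n) list \<Rightarrow> real) set" where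
  "W p = {wedge \<rho> p vs | vs \<tau>. \<tau> \<in> Faces \<and> (\<forall>l<p. vs l \<in> ivecs \<inter> tspace \<tau>)}"

definition phiJ :: "nat set \<Rightarrow> (real^'n) list" where
  "phiJ J = map bl (sl J)"

definition D :: "nat \<Rightarrow> (nat \<Rightarrow> real^'n) \<Rightarrow> nat set \<Rightarrow> real" where
  "D p vs J = ldet p (\<lambda>i l. bl (sl J ! i) \<bullet> vs l)"

lemma finite_Good: "finite (Good p)"
proof -
  have "Good p \<subseteq> Pow {..<m}" unfolding Good_def by auto
  then show ?thesis by (rule finite_subset) simp
qed

lemma wedge_phiJ:
  assumes "J \<subseteq> {..<m}" "card J = p"
  shows "wedge \<rho> p vs (phiJ J) = D p vs J"
proof -
  have fJ: "finite J" using assms(1) finite_subset by blast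
  have len: "length (phiJ J) = p" using assms sl_facts[OF fJ] unfolding phiJ_def by simp
  have set: "set (phiJ J) \<subseteq> Mlat \<rho>" using assms sl_facts[OF fJ] blM unfolding phiJ_def by auto
  have "ldet p (\<lambda>i l. phiJ J ! i \<bullet> vs l) = D p vs J"
    unfolding D_def phiJ_def by (rule ldet_cong) (use assms sl_facts[OF fJ] in simp)
  then show ?thesis unfolding wedge_def using len set by simp
qed

lemma H_gen:
  assumes "\<tau> \<in> Faces" "\<And>l. l < p \<Longrightarrow> vs l \<in> tspace \<tau>"
    and J: "J \<subseteq> {..<m}" "card J = p" "{..<k} \<subseteq> J"
  shows "D p vs J = 0"
proof -
  have fJ: "finite J" using J(1) finite_subset by blast
  note sf = sl_facts[OF fJ, unfolded J(2)]
  from up[OF assms(1)] show ?thesis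
  proof
    assume "\<exists>i<k. \<forall>v\<in>tspace \<tau>. bl i \<bullet> v = 0"
    then obtain i where i: "i < k" "\<forall>v\<in>tspace \<tau>. bl i \<bullet> v = 0" by blast
    then have "i \<in> J" using J by auto
    then obtain r where r: "r < p" "sl J ! r = i" using sf(5) by blast
    show ?thesis unfolding D_def
      by (rule ldet_zero_row[OF r(1)]) (use r i assms(2) in auto)
  next
    assume "\<exists>i<k. \<exists>j<k. i \<noteq> j \<and> (\<forall>v\<in>tspace \<tau>. bl i \<bullet> v = bl j \<bullet> v)"
    then obtain i j where ij: "i < k" "j < k" "i \<noteq> j" "\<forall>v\<in>tspace \<tau>. bl i \<bullet> v = bl j \<bullet> v" by blast
    then have "i \<in> J" "j \<in> J" using J by auto
    then obtain r r' where r: "r < p" "sl J ! r = i" "r' < p" "sl J ! r' = j" using sf(5) by metis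
    have "r \<noteq> r'" using r ij by auto
    show ?thesis unfolding D_def
      by (rule ldet_identical_rows[OF r(1) r(3) \<open>r \<noteq> r'\<close>]) (use r ij assms(2) in auto)
  qed
qed

lemma W_int:
  assumes "w \<in> W p"
  shows "w z \<in> \<int>"
proof -
  obtain vs \<tau> where w: "w = wedge \<rho> p vs" "\<forall>l<p. vs l \<in> ivecs \<inter> tspace \<tau>"
    using assms unfolding W_def by blast
  show ?thesis
  proof (cases "length z = p \<and> set z \<subseteq> Mlat \<rho>")
    case True
    then have "\<And>i. i < p \<Longrightarrow> z ! i \<in> ivecs" using Mlat_ivecs nth_mem by blast
    then have "ldet p (\<lambda>i l. (z ! i) \<bullet> vs l) \<in> \<int>"
      using w(2) by (intro ldet_int ivecs_inner) auto
    then show ?thesis using True w(1) unfolding wedge_def by simp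
  next
    case False
    then show ?thesis using w(1) unfolding wedge_def by auto
  qed
qed

lemma zspan_int:
  assumes "\<And>w z. w \<in> U \<Longrightarrow> w z \<in> \<int>" "t \<in> zspan U"
  shows "t z \<in> \<int>"
  using assms(2) unfolding zspan_def using assms(1) by (auto intro!: Ints_sum Ints_mult)

end


context alg begin

definition alpha :: "(real^'n) list \<Rightarrow> nat \<Rightarrow> nat \<Rightarrow> real" where
  "alpha phis i = (SOME \<alpha>. phis ! i = (\<Sum>j<m. \<alpha> j *\<^sub>R bl j))"

lemma alpha:
  assumes "i < length phis" "set phis \<subseteq> Mlat \<rho>"
  shows "phis ! i = (\<Sum>j<m. alpha phis i j *\<^sub>R bl j)"
proof -
  have "phis ! i \<in> Mlat \<rho>" using assms nth_mem by blast
  from gen[OF this] show ?thesis unfolding alpha_def by (rule someI_ex)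
qed

definition pf :: "nat \<Rightarrow> (nat \<Rightarrow> nat) \<Rightarrow> (nat \<Rightarrow> nat)" where
  "pf p f = restrict_id (\<lambda>i. inv_into {..<p} (\<lambda>r. sl (f ` {..<p}) ! r) (f i)) {..<p}"

definition Fs :: "nat \<Rightarrow> nat set \<Rightarrow> (nat \<Rightarrow> nat) set" where
  "Fs p J = {f \<in> PiE {..<p} (\<lambda>_. {..<m}). inj_on f {..<p} \<and> f ` {..<p} = J}"

definition kappa :: "nat \<Rightarrow> (real^'n) list \<Rightarrow> nat set \<Rightarrow> real" where
  "kappa p phis J = (if length phis = p \<and> set phis \<subseteq> Mlat \<rho> then
     (\<Sum>f\<in>Fs p J. (\<Prod>i<p. alpha phis i (f i)) * of_int (sign (pf p f))) else 0)"

lemma expansion: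
  assumes H: "\<And>J. J \<subseteq> {..<m} \<Longrightarrow> card J = p \<Longrightarrow> {..<k} \<subseteq> J \<Longrightarrow> D p vs J = 0"
  shows "wedge \<rho> p vs phis = (\<Sum>J\<in>Good p. kappa p phis J * wedge \<rho> p vs (phiJ J))"
proof (cases "length phis = p \<and> set phis \<subseteq> Mlat \<rho>")
  case False
  have "wedge \<rho> p vs phis = 0" using False unfolding wedge_def by auto
  moreover have "\<And>J. kappa p phis J = 0" using False unfolding kappa_def by auto
  ultimately show ?thesis by simp
next
  case True
  let ?P = "PiE {..<p} (\<lambda>_. {..<m})"
  let ?a = "\<lambda>f. \<Prod>i<p. alpha phis i (f i)"
  let ?L = "\<lambda>f. ldet p (\<lambda>i l. bl (f i) \<bullet> vs l)"
  let ?T = "\<lambda>f. ?a f * of_int (sign (pf p f)) * D p vs (f ` {..<p})"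
  let ?Q = "\<lambda>f. inj_on f {..<p} \<and> f ` {..<p} \<in> Good p"
  have "wedge \<rho> p vs phis = ldet p (\<lambda>i l. phis ! i \<bullet> vs l)" using True by (simp add: wedge_def)
  also have "\<dots> = ldet p (\<lambda>i l. \<Sum>j<m. alpha phis i j * (bl j \<bullet> vs l))"
  proof (rule ldet_cong)
    fix i l assume "i < p" "l < p"
    then have "phis ! i = (\<Sum>j<m. alpha phis i j *\<^sub>R bl j)" using alpha True by simp
    then show "phis ! i \<bullet> vs l = (\<Sum>j<m. alpha phis i j * (bl j \<bullet> vs l))"
      by (simp add: inner_sum_left)
  qed
  also have "\<dots> = (\<Sum>f\<in>?P. ?a f * ?L f)" by (rule ldet_multilinear) simp
  also have "\<dots> = (\<Sum>f\<in>?P. if ?Q f then ?T f else 0)"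
  proof (rule sum.cong[OF refl])
    fix f assume f: "f \<in> ?P"
    show "?a f * ?L f = (if ?Q f then ?T f else 0)"
    proof (cases "inj_on f {..<p}")
      case False
      then obtain i j where ij: "i < p" "j < p" "i \<noteq> j" "f i = f j" unfolding inj_on_def by auto
      then have "?L f = 0" by (intro ldet_identical_rows[OF ij(1,2,3)]) auto
      then show ?thesis using False by simp
    next
      case inj: True
      let ?J = "f ` {..<p}"
      note pr = perm_rep[OF inj]
      have Jm: "?J \<subseteq> {..<m}" using f by auto
      have L: "?L f = of_int (sign (pf p f)) * D p vs ?J"
      proof -
        have pf2: "\<And>i. i < p \<Longrightarrow> sl ?J ! (pf p f i) = f i" using pr(2) unfolding pf_def .
        have "?L f = ldet p (\<lambda>i l. bl (sl ?J ! (pf p f i)) \<bullet> vs l)"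
          by (rule ldet_cong) (simp add: pf2)
        also have "\<dots> = of_int (sign (pf p f)) * D p vs ?J"
          unfolding D_def using pr(1) unfolding pf_def[symmetric]
          by (rule ldet_permute_rows)
        finally show ?thesis .
      qed
      show ?thesis
      proof (cases "?J \<in> Good p")
        case True then show ?thesis using L inj by simp
      next
        case False
        then have "{..<k} \<subseteq> ?J" using Jm pr(3) unfolding Good_def by auto
        then have "D p vs ?J = 0" using H Jm pr(3) by blast
        then show ?thesis using L by simp
      qed
    qed
  qed
  also have "\<dots> = (\<Sum>f\<in>{f\<in>?P. ?Q f}. ?T f)"
    by (rule sum.inter_filter[symmetric]) (simp add: finite_PiE)
  also have "\<dots> = (\<Sum>J\<in>Good p. \<Sum>f\<in>{f\<in>{f\<in>?P. ?Q f}. f ` {..<p} = J}. ?T f)"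
    by (rule sum.group[symmetric]) (auto simp: finite_Good finite_PiE)
  also have "\<dots> = (\<Sum>J\<in>Good p. kappa p phis J * D p vs J)"
  proof (rule sum.cong[OF refl])
    fix J assume J: "J \<in> Good p"
    have e: "{f\<in>{f\<in>?P. ?Q f}. f ` {..<p} = J} = Fs p J" using J unfolding Fs_def by auto
    have "(\<Sum>f\<in>Fs p J. ?T f) = (\<Sum>f\<in>Fs p J. ?a f * of_int (sign (pf p f)) * D p vs J)"
      by (rule sum.cong[OF refl]) (simp add: Fs_def)
    then show "(\<Sum>f\<in>{f\<in>{f\<in>?P. ?Q f}. f ` {..<p} = J}. ?T f) = kappa p phis J * D p vs J"
      unfolding e using True unfolding kappa_def by (simp add: sum_distrib_right)
  qed
  also have "\<dots> = (\<Sum>J\<in>Good p. kappa p phis J * wedge \<rho> p vs (phiJ J))"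
    by (rule sum.cong[OF refl]) (simp add: wedge_phiJ Good_def)
  finally show ?thesis .
qed

end


context alg begin

lemma W_expansion:
  assumes "w \<in> W p"
  shows "w z = (\<Sum>J\<in>Good p. kappa p z J * w (phiJ J))"
proof -
  obtain vs \<tau> where w: "w = wedge \<rho> p vs" "\<tau> \<in> Faces" "\<forall>l<p. vs l \<in> ivecs \<inter> tspace \<tau>"
    using assms unfolding W_def by blast
  have "\<And>J. J \<subseteq> {..<m} \<Longrightarrow> card J = p \<Longrightarrow> {..<k} \<subseteq> J \<Longrightarrow> D p vs J = 0"
    using H_gen[OF w(2)] w(3) by blast
  from expansion[OF this] show ?thesis unfolding w(1) .
qed

lemma zspan_expansion:
  assumes "t \<in> zspan (W p)"
  shows "t z = (\<Sum>J\<in>Good p. kappa p z J * t (phiJ J))"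
proof -
  obtain F c where t: "t = (\<lambda>z. \<Sum>w\<in>F. c w * w z)" "finite F" "F \<subseteq> W p"
    using assms unfolding zspan_def by blast
  have "t z = (\<Sum>w\<in>F. c w * (\<Sum>J\<in>Good p. kappa p z J * w (phiJ J)))"
    unfolding t(1) using t(3) W_expansion by (intro sum.cong refl) (auto)
  also have "\<dots> = (\<Sum>J\<in>Good p. kappa p z J * (\<Sum>w\<in>F. c w * w (phiJ J)))"
    by (simp add: sum_distrib_left mult_ac sum.swap[of _ F])
  also have "\<dots> = (\<Sum>J\<in>Good p. kappa p z J * t (phiJ J))"
    unfolding t(1) by simp
  finally show ?thesis .
qed

lemma upper:
  assumes "finite T" "T \<subseteq> zspan (W p)" "zindep T"
  shows "card T \<le> card (Good p)"
proof (rule ccontr)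
  assume "\<not> card T \<le> card (Good p)"
  then have lt: "card (Good p) < card T" by simp
  have int: "\<forall>t\<in>T. \<forall>J\<in>Good p. t (phiJ J) \<in> \<int>"
  proof (intro ballI)
    fix t J assume "t \<in> T" "J \<in> Good p"
    then have "t \<in> zspan (W p)" using assms(2) by blast
    then show "t (phiJ J) \<in> \<int>" by (rule zspan_int[rotated]) (rule W_int)
  qed
  obtain c where c: "\<forall>t\<in>T. c t \<in> \<int>" "\<exists>t\<in>T. c t \<noteq> 0"
      "\<forall>J\<in>Good p. (\<Sum>t\<in>T. c t * t (phiJ J)) = 0"
    using int_dep[OF finite_Good assms(1) lt, of "\<lambda>t J. t (phiJ J)"] int by blast
  have "(\<Sum>t\<in>T. c t * t z) = 0" for z
  proof -
    have "(\<Sum>t\<in>T. c t * t z) = (\<Sum>t\<in>T. c t * (\<Sum>J\<in>Good p. kappa p z J * t (phiJ J)))"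
      using assms(2) zspan_expansion by (intro sum.cong refl) auto
    also have "\<dots> = (\<Sum>J\<in>Good p. kappa p z J * (\<Sum>t\<in>T. c t * t (phiJ J)))"
      by (simp add: sum_distrib_left mult_ac sum.swap[of _ T])
    also have "\<dots> = 0" using c(3) by simp
    finally show ?thesis .
  qed
  then have "\<forall>t\<in>T. c t = 0" using assms(3) c(1) unfolding zindep_def by blast
  then show False using c(2) by blast
qed


definition gJ :: "nat \<Rightarrow> nat set \<Rightarrow> ((real^'n) list \<Rightarrow> real)" where
  "gJ p J = wedge \<rho> p (\<lambda>l. u (sl J ! l))"

lemma gJ_eval:
  assumes J: "J \<in> Good p" and J': "J' \<in> Good p"
  shows "gJ p J (phiJ J') = (if J = J' then d ^ p else 0)"
proof -
  have Jm: "J \<subseteq> {..<m}" "card J = p" and J'm: "J' \<subseteq> {..<m}" "card J' = p"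
    using J J' unfolding Good_def by auto
  have fJ: "finite J" and fJ': "finite J'" using Jm J'm finite_subset by auto
  note sJ = sl_facts[OF fJ, unfolded Jm(2)] and sJ' = sl_facts[OF fJ', unfolded J'm(2)]
  have "gJ p J (phiJ J') = D p (\<lambda>l. u (sl J ! l)) J'"
    unfolding gJ_def by (rule wedge_phiJ[OF J'm])
  also have "\<dots> = ldet p (\<lambda>r l. if sl J' ! r = sl J ! l then d else 0)"
    unfolding D_def
  proof (rule ldet_cong)
    fix r l assume "r < p" "l < p"
    then have "sl J' ! r < m" "sl J ! l < m" using sJ(4) sJ'(4) Jm J'm by auto
    then show "bl (sl J' ! r) \<bullet> u (sl J ! l) = (if sl J' ! r = sl J ! l then d else 0)"
      using dual by simp
  qed
  also have "\<dots> = (if J = J' then d ^ p else 0)"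
  proof (cases "J = J'")
    case True
    have "ldet p (\<lambda>r l. if sl J' ! r = sl J ! l then d else 0) = ldet p (\<lambda>r l. if r = l then d else 0)"
    proof (rule ldet_cong)
      fix r l assume "r < p" "l < p"
      then have "(sl J ! r = sl J ! l) = (r = l)" using sJ(1,3) by (simp add: nth_eq_iff_index_eq)
      then show "(if sl J' ! r = sl J ! l then d else 0) = (if r = l then d else 0)" using True by simp
    qed
    then show ?thesis using True ldet_diag by simp
  next
    case False
    have "\<exists>r<p. sl J' ! r \<notin> J"
    proof (rule ccontr)
      assume "\<not> (\<exists>r<p. sl J' ! r \<notin> J)"
      then have "J' \<subseteq> J" using sJ'(5) by blast
      then have "J' = J" using card_subset_eq[OF fJ] Jm(2) J'm(2) by simp
      then show False using False by simp
    qed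
    then obtain r where r: "r < p" "sl J' ! r \<notin> J" by blast
    have "ldet p (\<lambda>r l. if sl J' ! r = sl J ! l then d else 0) = 0"
      by (rule ldet_zero_row[OF r(1)]) (use r sJ(4) in auto)
    then show ?thesis using False by simp
  qed
  finally show ?thesis .
qed

lemma gJ_W:
  assumes J: "J \<in> Good p"
  shows "gJ p J \<in> W p"
proof -
  have Jm: "J \<subseteq> {..<m}" "card J = p" "\<not> {..<k} \<subseteq> J" using J unfolding Good_def by auto
  have fJ: "finite J" using Jm finite_subset by auto
  note sJ = sl_facts[OF fJ, unfolded Jm(2)]
  obtain i where i: "i < k" "i \<notin> J" using Jm(3) by auto
  obtain \<tau> where \<tau>: "\<tau> \<in> Faces" "\<forall>v. bl i \<bullet> v = 0 \<longrightarrow> v \<in> tspace \<tau>" using lo[OF i(1)] by blast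
  have "\<forall>l<p. u (sl J ! l) \<in> ivecs \<inter> tspace \<tau>"
  proof (intro allI impI IntI)
    fix l assume l: "l < p"
    then have jJ: "sl J ! l \<in> J" using sJ(4) by simp
    then have j: "sl J ! l < m" using Jm by auto
    then show "u (sl J ! l) \<in> ivecs" using uiv by simp
    have "i \<noteq> sl J ! l" using jJ i by auto
    then have "bl i \<bullet> u (sl J ! l) = 0" using dual[of i "sl J ! l"] j i km by simp
    then show "u (sl J ! l) \<in> tspace \<tau>" using \<tau> by simp
  qed
  then show ?thesis unfolding W_def gJ_def using \<tau>(1) by blast
qed

lemma gJ_inj: "inj_on (gJ p) (Good p)"
proof (rule inj_onI)
  fix J J' assume J: "J \<in> Good p" "J' \<in> Good p" "gJ p J = gJ p J'"
  have a: "gJ p J (phiJ J) = d ^ p" using gJ_eval[OF J(1) J(1)] by simp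
  have b: "gJ p J' (phiJ J) = (if J' = J then d ^ p else 0)" using gJ_eval[OF J(2) J(1)] .
  show "J = J'"
  proof (rule ccontr)
    assume ne: "J \<noteq> J'"
    have "gJ p J' (phiJ J) = 0" using b ne by simp
    moreover have "gJ p J' (phiJ J) = d ^ p" using a J(3) by simp
    ultimately show False using dnz by simp
  qed
qed

lemma gJ_zindep: "zindep (gJ p ` Good p)"
  unfolding zindep_def
proof (intro allI impI ballI)
  fix c t assume c: "(\<forall>t\<in>gJ p ` Good p. c t \<in> \<int>) \<and> (\<forall>z. (\<Sum>t\<in>gJ p ` Good p. c t * t z) = 0)"
    and t: "t \<in> gJ p ` Good p"
  then obtain J0 where J0: "J0 \<in> Good p" "t = gJ p J0" by blast
  have "0 = (\<Sum>t\<in>gJ p ` Good p. c t * t (phiJ J0))" using c by simp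
  also have "\<dots> = (\<Sum>J\<in>Good p. c (gJ p J) * gJ p J (phiJ J0))"
    by (rule sum.reindex_cong[OF gJ_inj refl]) simp
  also have "\<dots> = (\<Sum>J\<in>Good p. if J = J0 then c (gJ p J0) * d ^ p else 0)"
    by (rule sum.cong[OF refl]) (simp add: gJ_eval J0(1))
  also have "\<dots> = c (gJ p J0) * d ^ p" using J0(1) finite_Good by simp
  finally show "c t = 0" using dnz J0(2) by simp
qed

lemma zrank_W: "zrank (zspan (W p)) = card (Good p)"
  unfolding zrank_def
proof (rule Max_eqI)
  let ?S = "{card T |T. finite T \<and> T \<subseteq> zspan (W p) \<and> zindep T}"
  have "?S \<subseteq> {..card (Good p)}" using upper by auto
  then show "finite ?S" by (rule finite_subset) simp
next
  fix y assume "y \<in> {card T |T. finite T \<and> T \<subseteq> zspan (W p) \<and> zindep T}"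
  then show "y \<le> card (Good p)" using upper by auto
next
  have "card (gJ p ` Good p) = card (Good p)" using gJ_inj by (rule card_image)
  moreover have "gJ p ` Good p \<subseteq> zspan (W p)" using gJ_W zspan_gen by blast
  moreover have "finite (gJ p ` Good p)" using finite_Good by simp
  ultimately show "card (Good p) \<in> {card T |T. finite T \<and> T \<subseteq> zspan (W p) \<and> zindep T}"
    using gJ_zindep by (intro CollectI exI[of _ "gJ p ` Good p"]) simp
qed

end


lemma targmax_iff:
  assumes "finite A" "A \<noteq> {}"
  shows "a \<in> targmax A c x \<longleftrightarrow> a \<in> A \<and> (\<forall>b\<in>A. c b + b \<bullet> x \<le> c a + a \<bullet> x)"
proof -
  let ?V = "(\<lambda>a. c a + a \<bullet> x) ` A"
  have fin: "finite ?V" "?V \<noteq> {}" using assms by auto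
  have ge: "\<And>b. b \<in> A \<Longrightarrow> c b + b \<bullet> x \<le> tval A c x"
    unfolding tval_def using fin by (intro Max_ge) auto
  have "tval A c x \<in> ?V" unfolding tval_def using fin by (rule Max_in)
  then obtain b0 where b0: "b0 \<in> A" "tval A c x = c b0 + b0 \<bullet> x" by auto
  show ?thesis
  proof
    assume "a \<in> targmax A c x"
    then have "a \<in> A" "c a + a \<bullet> x = tval A c x" unfolding targmax_def by auto
    then show "a \<in> A \<and> (\<forall>b\<in>A. c b + b \<bullet> x \<le> c a + a \<bullet> x)" using ge by auto
  next
    assume a: "a \<in> A \<and> (\<forall>b\<in>A. c b + b \<bullet> x \<le> c a + a \<bullet> x)"
    then have "tval A c x \<le> c a + a \<bullet> x" using b0 by auto
    moreover have "c a + a \<bullet> x \<le> tval A c x" using ge a by auto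
    ultimately show "a \<in> targmax A c x" unfolding targmax_def using a by auto
  qed
qed

lemma targmax_ne:
  assumes "finite A" "A \<noteq> {}"
  shows "targmax A c x \<noteq> {}"
proof -
  let ?V = "(\<lambda>a. c a + a \<bullet> x) ` A"
  have fin: "finite ?V" "?V \<noteq> {}" using assms by auto
  have "tval A c x \<in> ?V" unfolding tval_def using fin by (rule Max_in)
  then obtain b0 where b0: "b0 \<in> A" "tval A c x = c b0 + b0 \<bullet> x" by auto
  then have "b0 \<in> targmax A c x" unfolding targmax_def by auto
  then show ?thesis by auto
qed

lemma targmax_eq:
  assumes "a \<in> targmax A c x" "b \<in> targmax A c x"
  shows "c a + a \<bullet> x = c b + b \<bullet> x"
  using assms unfolding targmax_def by auto

lemma perturb:
  assumes A: "finite A" "A \<noteq> {}" and T: "targmax A c x = T"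
  shows "\<exists>\<epsilon>>0. targmax A c (x + \<epsilon> *\<^sub>R w) = {a\<in>T. \<forall>b\<in>T. b \<bullet> w \<le> a \<bullet> w}"
proof -
  define val where "val z a = c a + a \<bullet> z" for z a
  have TA: "T \<subseteq> A" using T unfolding targmax_def by auto
  obtain t0 where t0: "t0 \<in> T" using targmax_ne[OF A, of c x] T by auto
  define M where "M = val x t0"
  have valT: "val x a = M" if "a \<in> T" for a
    using targmax_eq[of a A c x t0] that t0 T unfolding M_def val_def by simp
  have valA: "val x a \<le> M" if "a \<in> A" for a
    using t0 T targmax_iff[OF A] that unfolding M_def val_def by blast
  have valN: "val x a < M" if "a \<in> A" "a \<notin> T" for a
  proof -
    have "val x a \<noteq> M"
    proof
      assume "val x a = M"
      then have "\<forall>b\<in>A. val x b \<le> val x a" using valA by simp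
      then have "a \<in> targmax A c x" using targmax_iff[OF A] that(1) unfolding val_def by blast
      then show False using that T by simp
    qed
    then show ?thesis using valA[OF that(1)] by simp
  qed
  define g where "g = Min (insert 1 ((\<lambda>a. M - val x a) ` (A - T)))"
  have gpos: "g > 0" unfolding g_def using A valN by (subst Min_gr_iff) auto
  have gle: "M - val x a \<ge> g" if "a \<in> A" "a \<notin> T" for a
    unfolding g_def using A that by (intro Min_le) auto
  define K where "K = (\<Sum>a\<in>A. \<bar>a \<bullet> w\<bar>)"
  have Kge: "\<bar>a \<bullet> w\<bar> \<le> K" if "a \<in> A" for a
    unfolding K_def using A that by (intro member_le_sum) auto
  have K0: "K \<ge> 0" unfolding K_def by (simp add: sum_nonneg)
  define \<epsilon> where "\<epsilon> = g / (2 * K + 2)"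
  have epos: "\<epsilon> > 0" unfolding \<epsilon>_def using gpos K0 by simp
  have eK: "2 * (\<epsilon> * K) < g"
  proof -
    have "\<epsilon> * (2 * K + 2) = g" unfolding \<epsilon>_def using K0 by simp
    then show ?thesis using epos by (simp add: algebra_simps)
  qed
  have eb: "\<bar>\<epsilon> * (a \<bullet> w)\<bar> \<le> \<epsilon> * K" if "a \<in> A" for a
    using Kge[OF that] epos by (simp add: abs_mult mult_left_mono)
  have valy: "val (x + \<epsilon> *\<^sub>R w) a = val x a + \<epsilon> * (a \<bullet> w)" for a
    unfolding val_def by (simp add: inner_add_right)
  have "targmax A c (x + \<epsilon> *\<^sub>R w) = {a\<in>T. \<forall>b\<in>T. b \<bullet> w \<le> a \<bullet> w}"
  proof (rule equalityI; rule subsetI)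
    fix a assume a: "a \<in> targmax A c (x + \<epsilon> *\<^sub>R w)"
    then have aA: "a \<in> A" and amax: "\<forall>b\<in>A. val (x + \<epsilon> *\<^sub>R w) b \<le> val (x + \<epsilon> *\<^sub>R w) a"
      using targmax_iff[OF A] unfolding val_def by blast+
    have aT: "a \<in> T"
    proof (rule ccontr)
      assume "a \<notin> T"
      then have "M - val x a \<ge> g" using gle aA by blast
      moreover have "val (x + \<epsilon> *\<^sub>R w) t0 \<le> val (x + \<epsilon> *\<^sub>R w) a" using amax t0 TA by blast
      ultimately show False using valy[of t0] valy[of a] valT[OF t0] eb[OF aA] eb[of t0] t0 TA eK
        by (auto simp: abs_le_iff)
    qed
    moreover have "\<forall>b\<in>T. b \<bullet> w \<le> a \<bullet> w"
    proof
      fix b assume b: "b \<in> T"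
      then have "val (x + \<epsilon> *\<^sub>R w) b \<le> val (x + \<epsilon> *\<^sub>R w) a" using amax TA by blast
      then have "\<epsilon> * (b \<bullet> w) \<le> \<epsilon> * (a \<bullet> w)" using valy[of a] valy[of b] valT[OF b] valT[OF aT] by simp
      then show "b \<bullet> w \<le> a \<bullet> w" using epos by simp
    qed
    ultimately show "a \<in> {a\<in>T. \<forall>b\<in>T. b \<bullet> w \<le> a \<bullet> w}" by blast
  next
    fix a assume a: "a \<in> {a\<in>T. \<forall>b\<in>T. b \<bullet> w \<le> a \<bullet> w}"
    then have aT: "a \<in> T" and amax: "\<forall>b\<in>T. b \<bullet> w \<le> a \<bullet> w" by auto
    have "val (x + \<epsilon> *\<^sub>R w) b \<le> val (x + \<epsilon> *\<^sub>R w) a" if bA: "b \<in> A" for b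
    proof (cases "b \<in> T")
      case True
      then have "\<epsilon> * (b \<bullet> w) \<le> \<epsilon> * (a \<bullet> w)" using amax epos by (simp add: mult_left_mono)
      then show ?thesis using valy[of a] valy[of b] valT[OF True] valT[OF aT] by simp
    next
      case False
      then have "M - val x b \<ge> g" using gle bA by blast
      then show ?thesis using valy[of a] valy[of b] valT[OF aT] eb[OF bA] eb[of a] aT TA eK
        by (auto simp: abs_le_iff)
    qed
    then show "a \<in> targmax A c (x + \<epsilon> *\<^sub>R w)" using targmax_iff[OF A] aT TA unfolding val_def by blast
  qed
  then show ?thesis using epos by blast
qed


definition LL :: "(real^'n::finite) set \<Rightarrow> (real^'n) set" where
  "LL T = {v. \<forall>a\<in>T. \<forall>b\<in>T. a \<bullet> v = b \<bullet> v}"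

lemma subspace_LL: "subspace (LL T)"
  unfolding subspace_def
proof (intro conjI ballI allI)
  show "0 \<in> LL T" unfolding LL_def by simp
next
  fix x y assume xy: "x \<in> LL T" "y \<in> LL T"
  show "x + y \<in> LL T" unfolding LL_def
  proof (intro CollectI ballI)
    fix a b assume ab: "a \<in> T" "b \<in> T"
    have "a \<bullet> x = b \<bullet> x" "a \<bullet> y = b \<bullet> y" using xy ab unfolding LL_def by blast+
    then show "a \<bullet> (x + y) = b \<bullet> (x + y)" by (simp only: inner_add_right)
  qed
next
  fix r :: real and x assume x: "x \<in> LL T"
  show "r *\<^sub>R x \<in> LL T" unfolding LL_def
  proof (intro CollectI ballI)
    fix a b assume ab: "a \<in> T" "b \<in> T"
    have "a \<bullet> x = b \<bullet> x" using x ab unfolding LL_def by blast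
    then show "a \<bullet> (r *\<^sub>R x) = b \<bullet> (r *\<^sub>R x)" by (simp only: inner_scaleR_right)
  qed
qed

lemma tspace_face_sub: "tspace {y. T \<subseteq> targmax A c y} \<subseteq> LL T"
  unfolding tspace_def
proof (rule span_minimal[OF _ subspace_LL], rule subsetI)
  fix z assume "z \<in> {x - y |x y. x \<in> {y. T \<subseteq> targmax A c y} \<and> y \<in> {y. T \<subseteq> targmax A c y}}"
  then obtain x y where z: "z = x - y" "T \<subseteq> targmax A c x" "T \<subseteq> targmax A c y" by blast
  show "z \<in> LL T" unfolding LL_def
  proof (intro CollectI ballI)
    fix a b assume "a \<in> T" "b \<in> T"
    then have m: "a \<in> targmax A c x" "b \<in> targmax A c x" "a \<in> targmax A c y" "b \<in> targmax A c y"
      using z(2,3) by auto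
    have "c a + a \<bullet> x = c b + b \<bullet> x" by (rule targmax_eq[OF m(1,2)])
    moreover have "c a + a \<bullet> y = c b + b \<bullet> y" by (rule targmax_eq[OF m(3,4)])
    ultimately have "c a + a \<bullet> x = c b + b \<bullet> x" "c a + a \<bullet> y = c b + b \<bullet> y" by blast+
    then show "a \<bullet> z = b \<bullet> z" unfolding z(1) by (simp add: inner_diff_right)
  qed
qed

lemma tspace_face_sup:
  assumes A: "finite A" "A \<noteq> {}" and T: "targmax A c x = T"
  shows "LL T \<subseteq> tspace {y. T \<subseteq> targmax A c y}"
proof
  fix v assume v: "v \<in> LL T"
  obtain \<epsilon> where e: "\<epsilon> > 0" "targmax A c (x + \<epsilon> *\<^sub>R v) = {a\<in>T. \<forall>b\<in>T. b \<bullet> v \<le> a \<bullet> v}"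
    using perturb[OF A T] by blast
  have "\<forall>a\<in>T. \<forall>b\<in>T. a \<bullet> v = b \<bullet> v" using v unfolding LL_def by blast
  then have "{a\<in>T. \<forall>b\<in>T. b \<bullet> v \<le> a \<bullet> v} = T"
  proof -
    assume h: "\<forall>a\<in>T. \<forall>b\<in>T. a \<bullet> v = b \<bullet> v"
    have "a \<in> {a\<in>T. \<forall>b\<in>T. b \<bullet> v \<le> a \<bullet> v}" if "a \<in> T" for a
    proof -
      have "\<forall>b\<in>T. b \<bullet> v \<le> a \<bullet> v"
      proof
        fix b assume "b \<in> T"
        then have "b \<bullet> v = a \<bullet> v" using h that by blast
        then show "b \<bullet> v \<le> a \<bullet> v" by (rule eq_refl)
      qed
      then show ?thesis using that by blast
    qed
    then show ?thesis by blast
  qed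
  then have "x + \<epsilon> *\<^sub>R v \<in> {y. T \<subseteq> targmax A c y}" "x \<in> {y. T \<subseteq> targmax A c y}" using e T by auto
  then have "(x + \<epsilon> *\<^sub>R v) - x \<in> tspace {y. T \<subseteq> targmax A c y}"
    unfolding tspace_def by (intro span_base) blast
  then have "\<epsilon> *\<^sub>R v \<in> tspace {y. T \<subseteq> targmax A c y}" by simp
  then have "(1/\<epsilon>) *\<^sub>R (\<epsilon> *\<^sub>R v) \<in> tspace {y. T \<subseteq> targmax A c y}"
    unfolding tspace_def by (rule span_mul)
  then show "v \<in> tspace {y. T \<subseteq> targmax A c y}" using e(1) by simp
qed

lemma tfaces_E:
  assumes "\<tau> \<in> tfaces A c"
  obtains S x where "\<tau> = {y. S \<subseteq> targmax A c y}" "targmax A c x = S" "card S \<ge> 2"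
proof -
  from assms obtain S where S: "\<tau> = {y. S \<subseteq> targmax A c y}" "\<exists>x. targmax A c x = S \<and> card S \<ge> 2"
    unfolding tfaces_def by (auto simp only: mem_Collect_eq)
  then obtain x where x: "targmax A c x = S" "card S \<ge> 2" by blast
  show ?thesis by (rule that[OF S(1) x])
qed

lemma tfaces_I:
  assumes "targmax A c x = S" "card S \<ge> 2"
  shows "{y. S \<subseteq> targmax A c y} \<in> tfaces A c"
  unfolding tfaces_def using assms by (intro CollectI exI[of _ S]) auto


lemma card_bad:
  assumes "k \<le> m" "k \<le> p"
  shows "card {J. J \<subseteq> {..<m::nat} \<and> card J = p \<and> {..<k} \<subseteq> J} = (m - k) choose (p - k)"
proof -
  let ?Bad = "{J. J \<subseteq> {..<m::nat} \<and> card J = p \<and> {..<k} \<subseteq> J}"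
  let ?T = "{J'. J' \<subseteq> {k..<m} \<and> card J' = p - k}"
  have "bij_betw (\<lambda>J. J - {..<k}) ?Bad ?T"
  proof (rule bij_betw_byWitness[where f' = "\<lambda>J'. J' \<union> {..<k}"])
    show "\<forall>J\<in>?Bad. J - {..<k} \<union> {..<k} = J" by auto
    show "\<forall>J'\<in>?T. J' \<union> {..<k} - {..<k} = J'" by auto
    show "(\<lambda>J. J - {..<k}) ` ?Bad \<subseteq> ?T"
    proof
      fix J' assume "J' \<in> (\<lambda>J. J - {..<k}) ` ?Bad"
      then obtain J where J: "J \<subseteq> {..<m}" "card J = p" "{..<k} \<subseteq> J" "J' = J - {..<k}" by auto
      have "finite J" using J(1) finite_subset by blast
      then have "card J' = p - k" using J by (simp add: card_Diff_subset)
      moreover have "J' \<subseteq> {k..<m}" using J by auto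
      ultimately show "J' \<in> ?T" by simp
    qed
    show "(\<lambda>J'. J' \<union> {..<k}) ` ?T \<subseteq> ?Bad"
    proof
      fix J assume "J \<in> (\<lambda>J'. J' \<union> {..<k}) ` ?T"
      then obtain J' where J': "J' \<subseteq> {k..<m}" "card J' = p - k" "J = J' \<union> {..<k}" by auto
      have "finite J'" using J'(1) finite_subset by blast
      moreover have "J' \<inter> {..<k} = {}" using J'(1) by auto
      ultimately have "card J = p - k + k" using J' by (simp add: card_Un_disjoint)
      then have "card J = p" using assms by simp
      moreover have "J \<subseteq> {..<m}" using J' assms by auto
      ultimately show "J \<in> ?Bad" using J' by auto
    qed
  qed
  then have "card ?Bad = card ?T" by (rule bij_betw_same_card)
  also have "\<dots> = (m - k) choose (p - k)" using n_subsets[of "{k..<m}" "p - k"] by simp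
  finally show ?thesis .
qed

lemma card_good:
  assumes "k \<le> m"
  shows "card {J. J \<subseteq> {..<m::nat} \<and> card J = p \<and> \<not> {..<k} \<subseteq> J}
       + (if k \<le> p then (m - k) choose (p - k) else 0) = m choose p"
proof -
  let ?All = "{J. J \<subseteq> {..<m::nat} \<and> card J = p}"
  let ?G = "{J. J \<subseteq> {..<m::nat} \<and> card J = p \<and> \<not> {..<k} \<subseteq> J}"
  let ?Bad = "{J. J \<subseteq> {..<m::nat} \<and> card J = p \<and> {..<k} \<subseteq> J}"
  have fin: "finite ?All" by (rule finite_subset[of _ "Pow {..<m}"]) auto
  have "?All = ?G \<union> ?Bad" "?G \<inter> ?Bad = {}" by auto
  then have "card ?All = card ?G + card ?Bad"
    using fin by (metis (no_types, lifting) card_Un_disjoint finite_Un)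
  moreover have "card ?All = m choose p" using n_subsets[of "{..<m}" p] by simp
  moreover have "card ?Bad = (if k \<le> p then (m - k) choose (p - k) else 0)"
  proof (cases "k \<le> p")
    case True then show ?thesis using card_bad[OF assms True] by simp
  next
    case False
    have "?Bad = {}"
    proof (rule ccontr)
      assume "?Bad \<noteq> {}"
      then obtain J where J: "J \<subseteq> {..<m}" "card J = p" "{..<k} \<subseteq> J" by auto
      have "finite J" using J(1) finite_subset by blast
      then have "card {..<k} \<le> card J" using J(3) by (rule card_mono)
      then show False using J(2) False by simp
    qed
    then show ?thesis using False by simp
  qed
  ultimately show ?thesis by simp
qed


lemma binom_ext:
  fixes t :: real
  assumes "m \<le> N"
  shows "(1 - t) ^ m = (\<Sum>p=0..N. real (m choose p) * (-t) ^ p)"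
proof -
  have "(1 - t) ^ m = (-t + 1) ^ m" by simp
  also have "\<dots> = (\<Sum>p\<le>m. real (m choose p) * (-t) ^ p * 1 ^ (m - p))"
    by (rule binomial_ring)
  also have "\<dots> = (\<Sum>p=0..m. real (m choose p) * (-t) ^ p)"
    by (simp add: atLeast0AtMost)
  also have "\<dots> = (\<Sum>p=0..N. real (m choose p) * (-t) ^ p)"
    by (rule sum.mono_neutral_left) (use assms in auto)
  finally show ?thesis .
qed

lemma binom_shift:
  fixes t :: real
  assumes "q + k \<le> N"
  shows "(1 - t) ^ q * (-t) ^ k = (\<Sum>p=0..N. (if k \<le> p then real (q choose (p - k)) else 0) * (-t) ^ p)"
proof -
  have "(1 - t) ^ q = (\<Sum>j=0..N-k. real (q choose j) * (-t) ^ j)"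
    using assms by (intro binom_ext) simp
  then have "(1 - t) ^ q * (-t) ^ k = (\<Sum>j=0..N-k. real (q choose j) * (-t) ^ (j + k))"
    by (simp only: sum_distrib_right) (simp add: power_add mult.assoc)
  also have "\<dots> = (\<Sum>j=0..N-k. real (q choose (j + k - k)) * (-t) ^ (j + k))"
    by simp
  also have "\<dots> = (\<Sum>p=0+k..N-k+k. real (q choose (p - k)) * (-t) ^ p)"
    by (rule sum.shift_bounds_cl_nat_ivl[symmetric])
  also have "\<dots> = (\<Sum>p=k..N. real (q choose (p - k)) * (-t) ^ p)"
    using assms by simp
  also have "\<dots> = (\<Sum>p=0..N. (if k \<le> p then real (q choose (p - k)) else 0) * (-t) ^ p)"
    by (rule sum.mono_neutral_cong_left) (use assms in auto)
  finally show ?thesis .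
qed

lemma poly_id:
  fixes t :: real and R :: "nat \<Rightarrow> real"
  assumes mqk: "m = q + k" and k1: "1 \<le> k" and mn: "m \<le> n + 1"
    and R: "\<And>p. R p = real (m choose p) - (if k \<le> p then real (q choose (p - k)) else 0)"
  shows "(\<Sum>p=0..n. (-1)^p * R p * t^p) = (1 - t)^m - (1 - t)^q * (-t)^(m - q)"
proof -
  have "(1 - t)^m - (1 - t)^q * (-t)^(m - q)
      = (\<Sum>p=0..n+1. real (m choose p) * (-t) ^ p)
        - (\<Sum>p=0..n+1. (if k \<le> p then real (q choose (p - k)) else 0) * (-t) ^ p)"
    using binom_ext[OF mn, of t] binom_shift[of q k "n+1" t] mqk mn by simp
  also have "\<dots> = (\<Sum>p=0..n+1. R p * (-t) ^ p)"
    by (simp add: R sum_subtractf left_diff_distrib)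
  also have "\<dots> = (\<Sum>p=0..n. R p * (-t) ^ p) + R (n+1) * (-t)^(n+1)"
    by simp
  finally have eq: "(1 - t)^m - (1 - t)^q * (-t)^(m - q) = (\<Sum>p=0..n. R p * (-t) ^ p) + R (n+1) * (-t)^(n+1)" .
  have R0: "R (n+1) = 0"
  proof (cases "m = n + 1")
    case True
    then have "n + 1 - k = q" using mqk by simp
    then show ?thesis using R True mqk by simp
  next
    case False
    then have "m < n + 1" using mn by simp
    moreover have "q < n + 1 - k" using mqk mn False by simp
    ultimately show ?thesis using R mqk by (simp add: binomial_eq_0)
  qed
  have "(\<Sum>p=0..n. R p * (-t) ^ p) = (\<Sum>p=0..n. (-1)^p * R p * t^p)"
  proof (rule sum.cong[OF refl])
    fix p
    have "R p * (-t) ^ p = R p * ((-1) ^ p * t ^ p)" using power_minus[of t p] by (simp only:)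
    also have "\<dots> = (-1)^p * R p * t^p" by (simp only: mult.assoc mult.left_commute)
    finally show "R p * (-t) ^ p = (-1)^p * R p * t^p" .
  qed
  then show ?thesis using eq R0 by simp
qed


lemma nth_img: "(\<lambda>i. xs ! i) ` {..<length xs} = set xs"
  by (auto simp: in_set_conv_nth)

lemma enum_sub:
  assumes "finite B" "E \<subseteq> B"
  shows "\<exists>bl::nat \<Rightarrow> 'a. inj_on bl {..<card B} \<and> bl ` {..<card E} = E \<and> bl ` {..<card B} = B"
proof -
  have fE: "finite E" using assms finite_subset by blast
  obtain el where el: "set el = E" "distinct el" using finite_distinct_list[OF fE] by blast
  obtain rl where rl: "set rl = B - E" "distinct rl" using finite_distinct_list[of "B - E"] assms by blast
  let ?l = "el @ rl"
  have len_el: "length el = card E" using el distinct_card by metis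
  have len: "length ?l = card B"
  proof -
    have d0: "distinct ?l" using el rl by auto
    have "length ?l = card (set ?l)" by (rule distinct_card[OF d0, symmetric])
    also have "set ?l = B" using el rl assms by auto
    finally show ?thesis .
  qed
  have d: "distinct ?l" using el rl by auto
  have "inj_on (\<lambda>i. ?l ! i) {..<card B}"
    using d len by (intro inj_onI) (simp add: nth_eq_iff_index_eq)
  moreover have "(\<lambda>i. ?l ! i) ` {..<card E} = E"
  proof -
    have "(\<lambda>i. ?l ! i) ` {..<card E} = (\<lambda>i. el ! i) ` {..<length el}"
      using len_el by (intro image_cong) (auto simp: nth_append)
    also have "\<dots> = set el" by (rule nth_img)
    finally show ?thesis using el by simp
  qed
  moreover have "(\<lambda>i. ?l ! i) ` {..<card B} = B"
  proof -
    have "(\<lambda>i. ?l ! i) ` {..<length ?l} = set ?l" by (rule nth_img)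
    moreover have "set ?l = B" using el rl assms by auto
    ultimately show ?thesis using len by simp
  qed
  ultimately show ?thesis by blast
qed

lemma int_span_span: "int_span B \<subseteq> span B"
proof
  fix x assume "x \<in> int_span B"
  then obtain F c where x: "x = (\<Sum>b\<in>F. c b *\<^sub>R b)" "F \<subseteq> B" unfolding int_span_def by blast
  have "(\<Sum>b\<in>F. c b *\<^sub>R b) \<in> span B"
    by (rule span_sum) (use x(2) in \<open>auto intro: span_mul span_base\<close>)
  then show "x \<in> span B" using x(1) by simp
qed

lemma basis_ivecs: "(Basis :: (real^'n::finite) set) \<subseteq> ivecs"
proof
  fix x :: "real^'n" assume "x \<in> Basis"
  then obtain i where "x = axis i 1" unfolding Basis_vec_def by auto
  then show "x \<in> ivecs" unfolding ivecs_def by (auto simp: axis_def)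
qed

lemma lattice_basis_indep:
  fixes C :: "(real^'n::finite) set"
  assumes "lattice_basis ivecs C CARD('n)"
  shows "independent C" "span C = UNIV"
proof -
  have C: "finite C" "card C = CARD('n)" "int_span C = ivecs" using assms unfolding lattice_basis_def by auto
  have "Basis \<subseteq> span C" using basis_ivecs int_span_span C(3) by blast
  then have "span Basis \<subseteq> span C" by (rule span_minimal[OF _ subspace_span])
  then show sp: "span C = UNIV" unfolding span_Basis by blast
  show "independent C"
    by (rule card_le_dim_spanning[of C UNIV]) (use C sp in auto)
qed

lemma dual_indep:
  fixes w :: "nat \<Rightarrow> real^'n::finite"
  assumes "finite J" "d \<noteq> 0" "\<And>i j. i \<in> J \<Longrightarrow> j \<in> J \<Longrightarrow> v i \<bullet> w j = (if i = j then d else 0)"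
  shows "inj_on w J" "independent (w ` J)"
proof -
  show inj: "inj_on w J"
  proof (rule inj_onI)
    fix i j assume ij: "i \<in> J" "j \<in> J" "w i = w j"
    have "v i \<bullet> w i = d" using assms(3)[OF ij(1) ij(1)] by simp
    moreover have "v i \<bullet> w j = (if i = j then d else 0)" using assms(3)[OF ij(1) ij(2)] .
    ultimately show "i = j" using ij(3) assms(2) by (metis)
  qed
  show "independent (w ` J)"
    unfolding independent_explicit
  proof (intro conjI allI impI ballI)
    show "finite (w ` J)" using assms(1) by simp
  next
    fix c x assume c: "(\<Sum>x\<in>w ` J. c x *\<^sub>R x) = 0" and x: "x \<in> w ` J"
    then obtain i where i: "i \<in> J" "x = w i" by blast
    have "(\<Sum>j\<in>J. c (w j) *\<^sub>R w j) = 0" using c sum.reindex[OF inj, of "\<lambda>x. c x *\<^sub>R x"] by simp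
    then have "v i \<bullet> (\<Sum>j\<in>J. c (w j) *\<^sub>R w j) = 0" by simp
    then have "(\<Sum>j\<in>J. c (w j) * (v i \<bullet> w j)) = 0" by (simp add: inner_sum_right)
    also have "(\<Sum>j\<in>J. c (w j) * (v i \<bullet> w j)) = (\<Sum>j\<in>J. if j = i then c (w i) * d else 0)"
      using assms(3)[OF i(1)] by (intro sum.cong refl) auto
    also have "\<dots> = c (w i) * d" using i(1) assms(1) by simp
    finally show "c x = 0" using assms(2) i(2) by simp
  qed
qed


lemma Mlat_dim:
  fixes C \<rho> :: "(real^'n::finite) set"
  assumes C: "lattice_basis ivecs C CARD('n)" and rC: "\<rho> \<subseteq> C"
  shows "card \<rho> \<le> CARD('n)" "CARD('n) - card \<rho> \<le> dim (Mlat \<rho>)"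
proof -
  have Cf: "finite C" "card C = CARD('n)" "C \<subseteq> ivecs" using C unfolding lattice_basis_def by auto
  show "card \<rho> \<le> CARD('n)" using card_mono[OF Cf(1) rC] Cf(2) by simp
  define N where "N = CARD('n)"
  define r where "r = card \<rho>"
  obtain cl where cl: "inj_on cl {..<N}" "cl ` {..<r} = \<rho>" "cl ` {..<N} = C"
    using enum_sub[OF Cf(1) rC, unfolded Cf(2)] unfolding N_def r_def by blast
  have rN: "r \<le> N" using card_mono[OF Cf(1) rC] Cf(2) unfolding N_def r_def by simp
  have indC: "independent (cl ` {..<N})" using lattice_basis_indep(1)[OF C] cl(3) by simp
  have civ: "\<And>i. i < N \<Longrightarrow> cl i \<in> ivecs" using cl(3) Cf(3) by blast
  obtain w d where w: "d \<noteq> 0" "\<forall>j<N. w j \<in> ivecs" "\<forall>i<N. \<forall>j<N. cl i \<bullet> w j = (if i = j then d else 0)"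
    using dual_int_vectors[OF civ indC cl(1)] by blast
  have wM: "w ` {r..<N} \<subseteq> Mlat \<rho>"
  proof
    fix x assume "x \<in> w ` {r..<N}"
    then obtain j where j: "j \<in> {r..<N}" "x = w j" by blast
    have "\<forall>y\<in>\<rho>. x \<bullet> y = 0"
    proof
      fix y assume "y \<in> \<rho>"
      then obtain i where i: "i < r" "y = cl i" using cl(2) by blast
      have "cl i \<bullet> w j = 0" using w(3) i j rN by auto
      then show "x \<bullet> y = 0" using i j by (simp add: inner_commute)
    qed
    moreover have "x \<in> ivecs" using w(2) j by auto
    ultimately show "x \<in> Mlat \<rho>" unfolding Mlat_def by blast
  qed
  have dj: "\<And>i j. i \<in> {r..<N} \<Longrightarrow> j \<in> {r..<N} \<Longrightarrow> cl i \<bullet> w j = (if i = j then d else 0)"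
    using w(3) by auto
  note di = dual_indep[OF finite_atLeastLessThan w(1) dj]
  have "card (w ` {r..<N}) \<le> dim (Mlat \<rho>)" by (rule independent_card_le_dim[OF wM di(2)])
  moreover have "card (w ` {r..<N}) = N - r" using card_image[OF di(1)] by simp
  ultimately show "CARD('n) - card \<rho> \<le> dim (Mlat \<rho>)" unfolding N_def r_def by simp
qed

lemma B_indep:
  fixes B :: "(real^'n::finite) set"
  assumes "lattice_basis (Mlat \<rho>) B mm" "mm \<le> dim (Mlat \<rho>)"
  shows "independent B"
proof -
  have B: "finite B" "card B = mm" "int_span B = Mlat \<rho>" using assms(1) unfolding lattice_basis_def by auto
  have "Mlat \<rho> \<subseteq> span B" using int_span_span B(3) by blast
  then have "dim (Mlat \<rho>) \<le> dim (span B)" by (rule dim_subset)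
  then have "card B \<le> dim (span B)" using B(2) assms(2) by simp
  then show ?thesis by (rule card_le_dim_spanning[OF span_superset order_refl B(1)])
qed

lemma gen_lemma:
  fixes bl :: "nat \<Rightarrow> real^'n::finite"
  assumes "int_span B = Mlat \<rho>" "inj_on bl {..<m}" "bl ` {..<m} = B" "phi \<in> Mlat \<rho>"
  shows "\<exists>\<alpha>. phi = (\<Sum>j<m. \<alpha> j *\<^sub>R bl j)"
proof -
  obtain F c where phi: "phi = (\<Sum>b\<in>F. c b *\<^sub>R b)" "finite F" "F \<subseteq> B"
    using assms(1,4) unfolding int_span_def by blast
  define \<alpha> where "\<alpha> j = (if bl j \<in> F then c (bl j) else 0)" for j
  have fB: "finite B" using assms(3) by auto
  have "(\<Sum>j<m. \<alpha> j *\<^sub>R bl j) = (\<Sum>j<m. (\<lambda>b. if b \<in> F then c b *\<^sub>R b else 0) (bl j))"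
    by (rule sum.cong[OF refl]) (simp add: \<alpha>_def)
  also have "\<dots> = (\<Sum>b\<in>bl ` {..<m}. (if b \<in> F then c b *\<^sub>R b else 0))"
    using sum.reindex[OF assms(2), of "\<lambda>b. if b \<in> F then c b *\<^sub>R b else 0"]
    by (simp add: comp_def)
  also have "\<dots> = (\<Sum>b\<in>B. (if b \<in> F then c b *\<^sub>R b else 0))" using assms(3) by simp
  also have "\<dots> = (\<Sum>b\<in>F. c b *\<^sub>R b)"
    by (rule sum.mono_neutral_cong_right[OF fB phi(3)]) auto
  finally show ?thesis using phi(1) by metis
qed

lemma dim_perp:
  fixes bl :: "nat \<Rightarrow> real^'n::finite"
  assumes ind: "independent (bl ` {..<k})" and inj: "inj_on bl {..<k}"
  shows "dim {v. \<forall>i<k. bl i \<bullet> v = 0} = CARD('n) - k"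
proof -
  let ?E = "bl ` {..<k}"
  have "dim {y \<in> UNIV. \<forall>x\<in>span ?E. real_inner_class.orthogonal x y} + dim (span ?E) = dim (UNIV :: (real^'n) set)"
    by (rule dim_subspace_orthogonal_to_vectors) (auto simp: subspace_span)
  moreover have "{y \<in> UNIV. \<forall>x\<in>span ?E. real_inner_class.orthogonal x y} = {v. \<forall>i<k. bl i \<bullet> v = 0}"
  proof (rule equalityI; rule subsetI)
    fix v assume "v \<in> {y \<in> UNIV. \<forall>x\<in>span ?E. real_inner_class.orthogonal x y}"
    then have "\<forall>x\<in>span ?E. x \<bullet> v = 0" unfolding real_inner_class.orthogonal_def by simp
    then show "v \<in> {v. \<forall>i<k. bl i \<bullet> v = 0}" by (auto intro: span_base)
  next
    fix v assume v: "v \<in> {v. \<forall>i<k. bl i \<bullet> v = 0}"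
    have sub: "subspace {x. x \<bullet> v = 0}"
      unfolding subspace_def by (auto simp: inner_add_left)
    have "?E \<subseteq> {x. x \<bullet> v = 0}" using v by auto
    then have "span ?E \<subseteq> {x. x \<bullet> v = 0}" by (rule span_minimal[OF _ sub])
    then show "v \<in> {y \<in> UNIV. \<forall>x\<in>span ?E. real_inner_class.orthogonal x y}"
      unfolding real_inner_class.orthogonal_def by auto
  qed
  moreover have "dim (span ?E) = k"
    using dim_eq_card_independent[OF ind] card_image[OF inj] by (simp add: dim_span)
  ultimately show ?thesis by simp
qed


lemma two_elems:
  assumes "card S \<ge> 2"
  obtains a b where "a \<in> S" "b \<in> S" "a \<noteq> b"
proof -
  have "finite S" using assms by (metis card.infinite not_numeral_le_zero)
  have "\<not> (\<forall>a1\<in>S. \<forall>a2\<in>S. a1 = a2)"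
    using card_le_Suc0_iff_eq[OF \<open>finite S\<close>] assms by auto
  then show ?thesis using that by blast
qed

theorem corollary2p15:
  fixes Fan :: "(real^'n::finite) set set"
    and A0 A \<rho> \<sigma> :: "(real^'n) set"
    and c0 c :: "real^'n \<Rightarrow> real"
    and n q m :: nat
  assumes "CARD('n) = n + 1"
    and "smooth_fan Fan"
    and "trop_poly {} A0"
    and "nonsingular Fan (tvar A0 c0)"
    and "\<rho> \<in> Fan"
    and "trop_poly \<rho> A" and "prim_tri \<rho> A c"
    and "clos_stratum \<rho> (tvar A0 c0) = tvar A c"
    and "\<sigma> \<in> tfaces A c"
    and "q = dim (tspace \<sigma>) - card \<rho>"
    and "m = CARD('n) - card \<rho>"
  shows "\<forall>t::real. (\<Sum>p=0..n. (-1)^p * real (zrank (Fp \<rho> A c p \<sigma>)) * t^p)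
                   = (1 - t)^m - (1 - t)^q * (-t)^(m - q)"
proof -
  note Nn = assms(1) and mdef = assms(11) and qdef = assms(10)
  have "\<forall>\<rho>\<in>Fan. finite \<rho> \<and> (\<exists>B. lattice_basis ivecs B CARD('n) \<and> \<rho> \<subseteq> B)"
    using assms(2) unfolding smooth_fan_def by (elim conjE) assumption
  then have "finite \<rho> \<and> (\<exists>B. lattice_basis ivecs B CARD('n) \<and> \<rho> \<subseteq> B)" using assms(5) by (rule bspec)
  then have "\<exists>B. lattice_basis ivecs B CARD('n) \<and> \<rho> \<subseteq> B" by (rule conjunct2)
  then obtain C where C: "lattice_basis ivecs C CARD('n)" "\<rho> \<subseteq> C" by (elim exE conjE)
  note rN = Mlat_dim[OF C]
  have A: "finite A" "A \<noteq> {}" "A \<subseteq> Mlat \<rho>" using assms(6) unfolding trop_poly_def by auto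
  obtain S x0 where S: "\<sigma> = {y. S \<subseteq> targmax A c y}" "targmax A c x0 = S" "card S \<ge> 2"
    using tfaces_E[OF assms(9)] by blast
  have fS: "finite S" using S(3) by (metis card.infinite not_numeral_le_zero)
  have "\<exists>a0\<in>targmax A c x0.
     card ((\<lambda>a. a - a0) ` (targmax A c x0 - {a0})) = card (targmax A c x0) - 1 \<and>
     (\<exists>B. lattice_basis (Mlat \<rho>) B (CARD('n) - card \<rho>) \<and>
          (\<lambda>a. a - a0) ` (targmax A c x0 - {a0}) \<subseteq> B)"
    using assms(7) unfolding prim_tri_def by (rule spec)
  then have "\<exists>a0\<in>S.
     card ((\<lambda>a. a - a0) ` (S - {a0})) = card S - 1 \<and>
     (\<exists>B. lattice_basis (Mlat \<rho>) B (CARD('n) - card \<rho>) \<and>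
          (\<lambda>a. a - a0) ` (S - {a0}) \<subseteq> B)"
    unfolding S(2) .
  then obtain a0 B where a0: "a0 \<in> S"
      "card ((\<lambda>a. a - a0) ` (S - {a0})) = card S - 1"
      "lattice_basis (Mlat \<rho>) B (CARD('n) - card \<rho>)"
      "(\<lambda>a. a - a0) ` (S - {a0}) \<subseteq> B"
    by (elim bexE exE conjE)
  define E where "E = (\<lambda>a. a - a0) ` (S - {a0})"
  define k where "k = card S - 1"
  have k1: "1 \<le> k" using S(3) unfolding k_def by simp
  have B: "finite B" "card B = m" "int_span B = Mlat \<rho>" "B \<subseteq> Mlat \<rho>"
    using a0(3) mdef unfolding lattice_basis_def by auto
  have cE: "card E = k" using a0(2) unfolding E_def k_def .
  have EB: "E \<subseteq> B" using a0(4) unfolding E_def .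
  have km: "k \<le> m" using card_mono[OF B(1) EB] cE B(2) by simp
  obtain bl where bl: "inj_on bl {..<m}" "bl ` {..<k} = E" "bl ` {..<m} = B"
    using enum_sub[OF B(1) EB] unfolding cE B(2) by blast
  have indB: "independent B" using B_indep[OF a0(3) rN(2)] .
  have blM: "\<And>i. i < m \<Longrightarrow> bl i \<in> Mlat \<rho>" using bl(3) B(4) by blast
  have bliv: "\<And>i. i < m \<Longrightarrow> bl i \<in> ivecs" using blM Mlat_ivecs by blast
  obtain u d where ud: "d \<noteq> 0" "\<forall>j<m. u j \<in> ivecs" "\<forall>i<m. \<forall>j<m. bl i \<bullet> u j = (if i = j then d else 0)"
  proof -
    have "independent (bl ` {..<m})" using indB bl(3) by simp
    from dual_int_vectors[OF bliv this bl(1)] show ?thesis using that by blast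
  qed

  have bl_ne: "\<And>i. i < m \<Longrightarrow> bl i \<noteq> 0"
  proof
    fix i assume i: "i < m" "bl i = 0"
    have "bl i \<bullet> u i = d" using ud(3) i(1) by simp
    then show False using i(2) ud(1) by simp
  qed
  have Sdesc1: "\<And>a. a \<in> S \<Longrightarrow> a \<noteq> a0 \<Longrightarrow> \<exists>i<k. a = a0 + bl i"
  proof -
    fix a assume "a \<in> S" "a \<noteq> a0"
    then have "a - a0 \<in> E" unfolding E_def by blast
    then obtain i where "i < k" "bl i = a - a0" using bl(2) by (metis imageE lessThan_iff)
    then show "\<exists>i<k. a = a0 + bl i" by (metis add.commute diff_add_cancel)
  qed
  have Sdesc2: "\<And>i. i < k \<Longrightarrow> a0 + bl i \<in> S"
  proof -
    fix i assume "i < k"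
    then have "bl i \<in> E" using bl(2) by blast
    then obtain a where "a \<in> S - {a0}" "bl i = a - a0" unfolding E_def by blast
    then show "a0 + bl i \<in> S" by simp
  qed
  have Sdesc3: "\<And>i. i < k \<Longrightarrow> a0 + bl i \<noteq> a0" using bl_ne km by fastforce
  define Faces where "Faces = {\<tau> \<in> tfaces A c. \<sigma> \<subseteq> \<tau>}"
  have x0\<sigma>: "x0 \<in> \<sigma>" using S by simp

  have up: "\<And>\<tau>. \<tau> \<in> Faces \<Longrightarrow> (\<exists>i<k. \<forall>v\<in>tspace \<tau>. bl i \<bullet> v = 0)
               \<or> (\<exists>i<k. \<exists>j<k. i \<noteq> j \<and> (\<forall>v\<in>tspace \<tau>. bl i \<bullet> v = bl j \<bullet> v))"
  proof -
    fix \<tau> assume "\<tau> \<in> Faces"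
    then have \<tau>: "\<tau> \<in> tfaces A c" "\<sigma> \<subseteq> \<tau>" unfolding Faces_def by auto
    obtain S' x' where S': "\<tau> = {y. S' \<subseteq> targmax A c y}" "targmax A c x' = S'" "card S' \<ge> 2"
      using tfaces_E[OF \<tau>(1)] by blast
    have "x0 \<in> \<tau>" using x0\<sigma> \<tau>(2) by blast
    then have S'S: "S' \<subseteq> S" using S'(1) S(2) by blast
    obtain a b where ab: "a \<in> S'" "b \<in> S'" "a \<noteq> b" using two_elems[OF S'(3)] by blast
    have abv: "\<And>v. v \<in> tspace \<tau> \<Longrightarrow> a \<bullet> v = b \<bullet> v"
    proof -
      fix v assume "v \<in> tspace \<tau>"
      then have "v \<in> LL S'" using tspace_face_sub S'(1) by blast
      then show "a \<bullet> v = b \<bullet> v" using ab unfolding LL_def by blast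
    qed
    show "(\<exists>i<k. \<forall>v\<in>tspace \<tau>. bl i \<bullet> v = 0)
               \<or> (\<exists>i<k. \<exists>j<k. i \<noteq> j \<and> (\<forall>v\<in>tspace \<tau>. bl i \<bullet> v = bl j \<bullet> v))"
    proof (cases "a = a0 \<or> b = a0")
      case True
      then obtain e where e: "e \<in> S" "e \<noteq> a0" "\<And>v. v \<in> tspace \<tau> \<Longrightarrow> a0 \<bullet> v = e \<bullet> v"
      proof
        assume "a = a0"
        then show ?thesis using that[of b] ab abv S'S by auto
      next
        assume "b = a0"
        then show ?thesis using that[of a] ab abv S'S by (metis subsetD)
      qed
      obtain i where i: "i < k" "e = a0 + bl i" using Sdesc1[OF e(1,2)] by blast
      have "\<forall>v\<in>tspace \<tau>. bl i \<bullet> v = 0"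
      proof
        fix v assume "v \<in> tspace \<tau>"
        then have "a0 \<bullet> v = (a0 + bl i) \<bullet> v" using e(3) i(2) by simp
        then show "bl i \<bullet> v = 0" by (simp add: inner_add_left)
      qed
      then show ?thesis using i(1) by blast
    next
      case False
      obtain i where i: "i < k" "a = a0 + bl i" using Sdesc1 False ab S'S by blast
      obtain j where j: "j < k" "b = a0 + bl j" using Sdesc1 False ab S'S by blast
      have "i \<noteq> j" using i j ab(3) by auto
      moreover have "\<forall>v\<in>tspace \<tau>. bl i \<bullet> v = bl j \<bullet> v"
      proof
        fix v assume "v \<in> tspace \<tau>"
        then have "(a0 + bl i) \<bullet> v = (a0 + bl j) \<bullet> v" using abv i(2) j(2) by simp
        then show "bl i \<bullet> v = bl j \<bullet> v" by (simp add: inner_add_left)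
      qed
      ultimately show ?thesis using i(1) j(1) by blast
    qed
  qed

  have lo: "\<And>i. i < k \<Longrightarrow> \<exists>\<tau>\<in>Faces. \<forall>v. bl i \<bullet> v = 0 \<longrightarrow> v \<in> tspace \<tau>"
  proof -
    fix i assume i: "i < k"
    define w where "w = - (d *\<^sub>R (\<Sum>j\<in>{..<k} - {i}. u j))"
    have blw: "bl j \<bullet> w = (if j = i then 0 else - (d * d))" if j: "j < k" for j
    proof -
      have "bl j \<bullet> w = - (d * (\<Sum>j'\<in>{..<k} - {i}. bl j \<bullet> u j'))"
        unfolding w_def by (simp add: inner_sum_right)
      also have "(\<Sum>j'\<in>{..<k} - {i}. bl j \<bullet> u j') = (\<Sum>j'\<in>{..<k} - {i}. if j = j' then d else 0)"
        using ud(3) j km by (intro sum.cong refl) auto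
      also have "\<dots> = (if j \<in> {..<k} - {i} then d else 0)" by simp
      finally show ?thesis using j by auto
    qed
    have dd: "d * d > 0" using ud(1) by (simp add: not_square_less_zero order_le_neq_trans)
    obtain \<epsilon> where e: "\<epsilon> > 0" "targmax A c (x0 + \<epsilon> *\<^sub>R w) = {a\<in>S. \<forall>b\<in>S. b \<bullet> w \<le> a \<bullet> w}"
      using perturb[OF A(1,2) S(2)] by blast
    define P where "P = {a0, a0 + bl i}"
    have valS: "a \<bullet> w \<le> a0 \<bullet> w" if aS: "a \<in> S" for a
    proof (cases "a = a0")
      case False
      then obtain j where j: "j < k" "a = a0 + bl j" using Sdesc1 aS by blast
      then show ?thesis using blw[OF j(1)] dd by (simp add: inner_add_left)
    qed simp
    have "{a\<in>S. \<forall>b\<in>S. b \<bullet> w \<le> a \<bullet> w} = P"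
    proof (rule equalityI; rule subsetI)
      fix a assume a: "a \<in> {a\<in>S. \<forall>b\<in>S. b \<bullet> w \<le> a \<bullet> w}"
      show "a \<in> P"
      proof (cases "a = a0")
        case False
        then obtain j where j: "j < k" "a = a0 + bl j" using Sdesc1 a by blast
        have "a0 \<bullet> w \<le> a \<bullet> w" using a a0(1) by blast
        then have "j = i" using blw[OF j(1)] dd j(2) by (auto simp: inner_add_left split: if_splits)
        then show ?thesis using j unfolding P_def by simp
      qed (simp add: P_def)
    next
      fix a assume "a \<in> P"
      then have "a = a0 \<or> a = a0 + bl i" unfolding P_def by simp
      moreover have "(a0 + bl i) \<bullet> w = a0 \<bullet> w" using blw[OF i] by (simp add: inner_add_left)
      ultimately have "a \<in> S" "a \<bullet> w = a0 \<bullet> w" using a0(1) Sdesc2[OF i] by auto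
      then show "a \<in> {a\<in>S. \<forall>b\<in>S. b \<bullet> w \<le> a \<bullet> w}" using valS by auto
    qed
    then have tP: "targmax A c (x0 + \<epsilon> *\<^sub>R w) = P" using e(2) by simp
    have cP: "card P = 2" using Sdesc3[OF i] unfolding P_def by auto
    define \<tau> where "\<tau> = {y. P \<subseteq> targmax A c y}"
    have \<tau>F: "\<tau> \<in> tfaces A c" unfolding \<tau>_def using tfaces_I[OF tP] cP by simp
    have "P \<subseteq> S" using a0(1) Sdesc2[OF i] unfolding P_def by simp
    then have "\<sigma> \<subseteq> \<tau>" unfolding S(1) \<tau>_def by blast
    then have \<tau>Faces: "\<tau> \<in> Faces" using \<tau>F unfolding Faces_def by simp
    have "\<forall>v. bl i \<bullet> v = 0 \<longrightarrow> v \<in> tspace \<tau>"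
    proof (intro allI impI)
      fix v assume v: "bl i \<bullet> v = 0"
      have "v \<in> LL P" unfolding LL_def P_def using v by (auto simp: inner_add_left)
      then show "v \<in> tspace \<tau>" using tspace_face_sup[OF A(1,2) tP] unfolding \<tau>_def by blast
    qed
    then show "\<exists>\<tau>\<in>Faces. \<forall>v. bl i \<bullet> v = 0 \<longrightarrow> v \<in> tspace \<tau>" using \<tau>Faces by blast
  qed

  have gen: "\<And>phi. phi \<in> Mlat \<rho> \<Longrightarrow> \<exists>\<alpha>. phi = (\<Sum>j<m. \<alpha> j *\<^sub>R bl j)"
    using gen_lemma[OF B(3) bl(1,3)] by blast
  interpret alg \<rho> bl m k Faces u d
    by (unfold_locales) (use blM gen km up lo ud in auto)
  have Fp_eq: "Fp \<rho> A c p \<sigma> = zspan (W p)" for p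
  proof -
    have "W p = {wedge \<rho> p vs | vs \<tau>. \<tau> \<in> Faces \<and> (\<forall>l<p. vs l \<in> ivecs \<inter> tspace \<tau>)}"
      by (rule W_def)
    also have "\<dots> = {wedge \<rho> p vs | vs \<tau>. \<tau> \<in> tfaces A c \<and> \<sigma> \<subseteq> \<tau> \<and> (\<forall>k<p. vs k \<in> ivecs \<inter> tspace \<tau>)}"
      unfolding Faces_def by blast
    finally show ?thesis unfolding Fp_def by simp
  qed
  have rank: "real (zrank (Fp \<rho> A c p \<sigma>)) = real (m choose p) - (if k \<le> p then real ((m - k) choose (p - k)) else 0)" for p
  proof -
    have "zrank (Fp \<rho> A c p \<sigma>) = card (Good p)" unfolding Fp_eq by (rule zrank_W)
    moreover have "card (Good p) + (if k \<le> p then (m - k) choose (p - k) else 0) = m choose p"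
      unfolding Good_def by (rule card_good[OF km])
    ultimately show ?thesis by (cases "k \<le> p") (simp_all add: of_nat_diff flip: of_nat_add)
  qed
  have tsig: "tspace \<sigma> = {v. \<forall>i<k. bl i \<bullet> v = 0}"
  proof -
    have "tspace \<sigma> = LL S"
      using tspace_face_sub[of S A c] tspace_face_sup[OF A(1,2) S(2)] unfolding S(1) by blast
    also have "LL S = {v. \<forall>i<k. bl i \<bullet> v = 0}"
    proof (rule equalityI; rule subsetI)
      fix v assume v: "v \<in> LL S"
      show "v \<in> {v. \<forall>i<k. bl i \<bullet> v = 0}"
      proof (intro CollectI allI impI)
        fix i assume "i < k"
        then have "a0 \<bullet> v = (a0 + bl i) \<bullet> v" using v a0(1) Sdesc2 unfolding LL_def by blast
        then show "bl i \<bullet> v = 0" by (simp add: inner_add_left)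
      qed
    next
      fix v assume v: "v \<in> {v. \<forall>i<k. bl i \<bullet> v = 0}"
      have va: "a \<bullet> v = a0 \<bullet> v" if "a \<in> S" for a
      proof (cases "a = a0")
        case False
        then obtain j where "j < k" "a = a0 + bl j" using Sdesc1 \<open>a \<in> S\<close> by blast
        then show ?thesis using v by (simp add: inner_add_left)
      qed simp
      show "v \<in> LL S" unfolding LL_def
      proof (intro CollectI ballI)
        fix a b assume "a \<in> S" "b \<in> S"
        then show "a \<bullet> v = b \<bullet> v" using va by metis
      qed
    qed
    finally show ?thesis .
  qed
  have "bl ` {..<k} \<subseteq> B" using bl(2) EB by simp
  then have indk: "independent (bl ` {..<k})" by (rule independent_mono[OF indB])
  have injk: "inj_on bl {..<k}" using bl(1) km by (auto intro: inj_on_subset)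
  have "dim (tspace \<sigma>) = CARD('n) - k" unfolding tsig by (rule dim_perp[OF indk injk])
  then have qmk: "q = m - k" using qdef mdef by simp
  have mqk: "m = q + k" using qmk km by simp
  have mn: "m \<le> n + 1" using mdef Nn by simp
  show ?thesis
  proof
    fix t :: real
    show "(\<Sum>p=0..n. (-1)^p * real (zrank (Fp \<rho> A c p \<sigma>)) * t^p) = (1 - t)^m - (1 - t)^q * (-t)^(m - q)"
      by (rule poly_id[OF mqk k1 mn]) (simp add: rank qmk)
  qed
qed


end
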